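(* The following are equivalent: (A) the $K$-linear map $\mathrm{eval}_\int:P(\mathcal{A})\to\mathbb{C}$ is injective (i.e. the period conjecture holds for $(\mathcal{A},H_B,H_{dR},\int)$); (B) for all $M\in\mathcal{A}$, $\sigma\in H_B(M)$ and $\omega\in H_{dR}(M)^\vee$ with $\int_\sigma\omega=0$ there exists a short exact sequence $0\to N'\xrightarrow{s}M\xrightarrow{p}N\to0$ in $\mathcal{A}$ with $\sigma\in H_B(s)(H_B(N'))$ and $\omega\in p^\vee(H_{dR}(N)^\vee)$.
   Context: Let $K\subseteq\mathbb{C}$ be a subfield and $\mathcal{A}$ a $\mathbb{Q}$-linear abelian category. A fiber functor over a field $F\supseteq\mathbb{Q}$ is a $\mathbb{Q}$-linear, exact, faithful covariant functor from $\mathcal{A}$ to finite-dimensional $F$-vector spaces. $H_B$ is a fiber functor over $\mathbb{Q}$, $H_{dR}$ a fiber functor over $K$, and $\int:H_B\otimes_{\mathbb{Q}}\mathbb{C}\to H_{dR}\otimes_K\mathbb{C}$ a natural isomorphism. $V^\vee$ is the $K$-dual; $\alpha^\vee$ is the dual of $H_{dR}(\alpha)$. $P(\mathcal{A})$ is $\bigoplus_{M}H_B(M)\otimes_{\mathbb{Q}}H_{dR}(M)^\vee$ (summand of $M$ written $(\cdot)_M$, $K$ acting on the second factor) modulo the $K$-span of all $(\sigma\otimes\alpha^\vee(\omega))_M-(H_B(\alpha)(\sigma)\otimes\omega)_N$ for morphisms $\alpha:M\to N$, $\sigma\in H_B(M)$, $\omega\in H_{dR}(N)^\vee$. For $\sigma\in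 H_B(M)$, $\omega\in H_{dR}(M)^\vee$ put $\int_\sigma\omega:=(\omega\otimes\mathrm{id}_{\mathbb{C}})(\int_M(\sigma\otimes1))\in\mathbb{C}$, and $\mathrm{eval}_\int:P(\mathcal{A})\to\mathbb{C}$ is the $K$-linear map $(\sigma\otimes\omega)_M\mapsto\int_\sigma\omega$. *)

theory Defs
  imports Complex_Main "HOL-Library.Function_Algebras" "Jordan_Normal_Form.Matrix"
begin

record ('o, 'm) qcat =
  cdom  :: "'m \<Rightarrow> 'o"
  ccod  :: "'m \<Rightarrow> 'o"
  ccomp :: "'m \<Rightarrow> 'm \<Rightarrow> 'm"        (* ccomp C g f = g o f *)
  cid   :: "'o \<Rightarrow> 'm"
  czero :: "'o \<Rightarrow> 'o \<Rightarrow> 'm"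
  cadd  :: "'m \<Rightarrow> 'm \<Rightarrow> 'm"
  csmul :: "rat \<Rightarrow> 'm \<Rightarrow> 'm"

definition hom :: "('o, 'm, 'x) qcat_scheme \<Rightarrow> 'o \<Rightarrow> 'o \<Rightarrow> 'm set" where
  "hom C X Y = {f. cdom C f = X \<and> ccod C f = Y}"

definition is_category :: "('o, 'm, 'x) qcat_scheme \<Rightarrow> bool" where
  "is_category C \<longleftrightarrow>
     (\<forall>X Y Z f g. f \<in> hom C X Y \<longrightarrow> g \<in> hom C Y Z \<longrightarrow> ccomp C g f \<in> hom C X Z) \<and>
     (\<forall>X. cid C X \<in> hom C X X) \<and>
     (\<forall>X Y f. f \<in> hom C X Y \<longrightarrow> ccomp C f (cid C X) = f \<and> ccomp C (cid C Y) f = f) \<and>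
     (\<forall>W X Y Z f g h. f \<in> hom C W X \<longrightarrow> g \<in> hom C X Y \<longrightarrow> h \<in> hom C Y Z \<longrightarrow>
        ccomp C h (ccomp C g f) = ccomp C (ccomp C h g) f)"

definition is_Qlinear :: "('o, 'm, 'x) qcat_scheme \<Rightarrow> bool" where
  "is_Qlinear C \<longleftrightarrow>
     (\<forall>X Y. czero C X Y \<in> hom C X Y \<and>
        (\<forall>f\<in>hom C X Y. \<forall>g\<in>hom C X Y. cadd C f g \<in> hom C X Y) \<and>
        (\<forall>q. \<forall>f\<in>hom C X Y. csmul C q f \<in> hom C X Y) \<and>
        (\<forall>f\<in>hom C X Y. \<forall>g\<in>hom C X Y. \<forall>h\<in>hom C X Y.
            cadd C (cadd C f g) h = cadd C f (cadd C g h)) \<and>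
        (\<forall>f\<in>hom C X Y. \<forall>g\<in>hom C X Y. cadd C f g = cadd C g f) \<and>
        (\<forall>f\<in>hom C X Y. cadd C (czero C X Y) f = f) \<and>
        (\<forall>f\<in>hom C X Y. cadd C f (csmul C (-1) f) = czero C X Y) \<and>
        (\<forall>f\<in>hom C X Y. csmul C 1 f = f) \<and>
        (\<forall>a b. \<forall>f\<in>hom C X Y. csmul C (a * b) f = csmul C a (csmul C b f)) \<and>
        (\<forall>a b. \<forall>f\<in>hom C X Y. csmul C (a + b) f = cadd C (csmul C a f) (csmul C b f)) \<and>
        (\<forall>a. \<forall>f\<in>hom C X Y. \<forall>g\<in>hom C X Y.
            csmul C a (cadd C f g) = cadd C (csmul C a f) (csmul C a g))) \<and>
     (\<forall>X Y Z. \<forall>f\<in>hom C X Y. \<forall>f'\<in>hom C X Y. \<forall>g\<in>hom C Y Z. \<forall>g'\<in>hom C Y Z.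
        ccomp C g (cadd C f f') = cadd C (ccomp C g f) (ccomp C g f') \<and>
        ccomp C (cadd C g g') f = cadd C (ccomp C g f) (ccomp C g' f) \<and>
        (\<forall>a. ccomp C g (csmul C a f) = csmul C a (ccomp C g f) \<and>
             ccomp C (csmul C a g) f = csmul C a (ccomp C g f)))"

definition is_kernel :: "('o, 'm, 'x) qcat_scheme \<Rightarrow> 'm \<Rightarrow> 'm \<Rightarrow> bool" where
  "is_kernel C k f \<longleftrightarrow>
     ccod C k = cdom C f \<and> ccomp C f k = czero C (cdom C k) (ccod C f) \<and>
     (\<forall>g. ccod C g = cdom C f \<and> ccomp C f g = czero C (cdom C g) (ccod C f) \<longrightarrow>
        (\<exists>!h. h \<in> hom C (cdom C g) (cdom C k) \<and> ccomp C k h = g))"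

definition is_cokernel :: "('o, 'm, 'x) qcat_scheme \<Rightarrow> 'm \<Rightarrow> 'm \<Rightarrow> bool" where
  "is_cokernel C c f \<longleftrightarrow>
     cdom C c = ccod C f \<and> ccomp C c f = czero C (cdom C f) (ccod C c) \<and>
     (\<forall>g. cdom C g = ccod C f \<and> ccomp C g f = czero C (cdom C f) (ccod C g) \<longrightarrow>
        (\<exists>!h. h \<in> hom C (ccod C c) (ccod C g) \<and> ccomp C h c = g))"

definition is_mono :: "('o, 'm, 'x) qcat_scheme \<Rightarrow> 'm \<Rightarrow> bool" where
  "is_mono C f \<longleftrightarrow> (\<forall>g h. ccod C g = cdom C f \<and> ccod C h = cdom C f \<and> cdom C g = cdom C h \<and>
       ccomp C f g = ccomp C f h \<longrightarrow> g = h)"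

definition is_epi :: "('o, 'm, 'x) qcat_scheme \<Rightarrow> 'm \<Rightarrow> bool" where
  "is_epi C f \<longleftrightarrow> (\<forall>g h. cdom C g = ccod C f \<and> cdom C h = ccod C f \<and> ccod C g = ccod C h \<and>
       ccomp C g f = ccomp C h f \<longrightarrow> g = h)"

definition Qlinear_abelian :: "('o, 'm, 'x) qcat_scheme \<Rightarrow> bool" where
  "Qlinear_abelian C \<longleftrightarrow> is_category C \<and> is_Qlinear C \<and>
     (\<exists>Z. \<forall>X. (\<forall>f\<in>hom C Z X. f = czero C Z X) \<and> (\<forall>f\<in>hom C X Z. f = czero C X Z)) \<and>
     (\<forall>X Y. \<exists>S i1 i2 p1 p2. i1 \<in> hom C X S \<and> i2 \<in> hom C Y S \<and> p1 \<in> hom C S X \<and> p2 \<in> hom C S Y \<and>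
        ccomp C p1 i1 = cid C X \<and> ccomp C p2 i2 = cid C Y \<and>
        ccomp C p1 i2 = czero C Y X \<and> ccomp C p2 i1 = czero C X Y \<and>
        cadd C (ccomp C i1 p1) (ccomp C i2 p2) = cid C S) \<and>
     (\<forall>f. \<exists>k. is_kernel C k f) \<and> (\<forall>f. \<exists>c. is_cokernel C c f) \<and>
     (\<forall>f. is_mono C f \<longrightarrow> (\<exists>g. is_kernel C f g)) \<and>
     (\<forall>f. is_epi C f \<longrightarrow> (\<exists>g. is_cokernel C f g))"

definition short_exact :: "('o, 'm, 'x) qcat_scheme \<Rightarrow> 'm \<Rightarrow> 'm \<Rightarrow> bool" where
  "short_exact C s p \<longleftrightarrow> is_kernel C s p \<and> is_cokernel C p s"

definition subfield_C :: "complex set \<Rightarrow> bool" where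
  "subfield_C F \<longleftrightarrow> 0 \<in> F \<and> 1 \<in> F \<and>
     (\<forall>x\<in>F. \<forall>y\<in>F. x + y \<in> F \<and> x * y \<in> F) \<and>
     (\<forall>x\<in>F. - x \<in> F \<and> (x \<noteq> 0 \<longrightarrow> inverse x \<in> F))"

definition Fvec :: "complex set \<Rightarrow> nat \<Rightarrow> complex vec set" where
  "Fvec F n = {v \<in> carrier_vec n. \<forall>i<n. v $ i \<in> F}"

definition Fmat :: "complex set \<Rightarrow> nat \<Rightarrow> nat \<Rightarrow> complex mat set" where
  "Fmat F n m = {A \<in> carrier_mat n m. \<forall>i<n. \<forall>j<m. A $$ (i, j) \<in> F}"

definition fiber_functor ::
  "('o, 'm, 'x) qcat_scheme \<Rightarrow> complex set \<Rightarrow> ('o \<Rightarrow> nat) \<Rightarrow> ('m \<Rightarrow> complex mat) \<Rightarrow> bool" where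
  "fiber_functor C F d H \<longleftrightarrow>
     (\<forall>f. H f \<in> Fmat F (d (ccod C f)) (d (cdom C f))) \<and>
     (\<forall>X. H (cid C X) = 1\<^sub>m (d X)) \<and>
     (\<forall>f g. ccod C f = cdom C g \<longrightarrow> H (ccomp C g f) = H g * H f) \<and>
     (\<forall>X Y. \<forall>f\<in>hom C X Y. \<forall>g\<in>hom C X Y. H (cadd C f g) = H f + H g) \<and>
     (\<forall>q f. H (csmul C q f) = of_rat q \<cdot>\<^sub>m H f) \<and>
     (\<forall>X Y. \<forall>f\<in>hom C X Y. \<forall>g\<in>hom C X Y. H f = H g \<longrightarrow> f = g) \<and>
     (\<forall>s p. short_exact C s p \<longrightarrow>
        (\<forall>v\<in>Fvec F (d (cdom C s)). H s *\<^sub>v v = 0\<^sub>v (d (ccod C s)) \<longrightarrow> v = 0\<^sub>v (d (cdom C s))) \<and>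
        (\<forall>w\<in>Fvec F (d (ccod C p)). \<exists>v\<in>Fvec F (d (cdom C p)). H p *\<^sub>v v = w) \<and>
        (\<forall>v\<in>Fvec F (d (cdom C p)).
           H p *\<^sub>v v = 0\<^sub>v (d (ccod C p)) \<longleftrightarrow> (\<exists>u\<in>Fvec F (d (cdom C s)). H s *\<^sub>v u = v)))"

text \<open>The comparison isomorphism int: H_B (x) C -> H_dR (x) C, natural in M; in coordinates
  int M is an invertible complex (dR M x dB M)-matrix.\<close>
definition comparison ::
  "('o, 'm, 'x) qcat_scheme \<Rightarrow> ('o \<Rightarrow> nat) \<Rightarrow> ('m \<Rightarrow> complex mat) \<Rightarrow> ('o \<Rightarrow> nat) \<Rightarrow>
   ('m \<Rightarrow> complex mat) \<Rightarrow> ('o \<Rightarrow> complex mat) \<Rightarrow> bool" where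
  "comparison C dB HB dR HdR I \<longleftrightarrow>
     (\<forall>M. I M \<in> carrier_mat (dR M) (dB M) \<and> invertible_mat (I M)) \<and>
     (\<forall>f. I (ccod C f) * HB f = HdR f * I (cdom C f))"

text \<open>Elements of H_dR(M)^dual are coordinate vectors w in K^(dR M) (acting by v |-> w . v);
  the dual map of H_dR(alpha) is multiplication by the transpose.\<close>
definition dual_map :: "complex mat \<Rightarrow> complex vec \<Rightarrow> complex vec" where
  "dual_map A w = transpose_mat A *\<^sub>v w"

text \<open>int_sigma omega = (omega (x) id_C)(int_M (sigma (x) 1)).\<close>
definition period :: "('o \<Rightarrow> complex mat) \<Rightarrow> 'o \<Rightarrow> complex vec \<Rightarrow> complex vec \<Rightarrow> complex" where
  "period I M \<sigma> \<omega> = scalar_prod \<omega> (I M *\<^sub>v \<sigma>)"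

text \<open>Elements of the direct sum over M of H_B(M) (x)_Q H_dR(M)^dual, where
  Q^b (x)_Q K^d is identified with K^(b x d) via sigma (x) omega |-> (sigma_i omega_j):
  a family of coefficient arrays indexed by objects.\<close>
definition ptensor ::
  "('o \<Rightarrow> nat) \<Rightarrow> ('o \<Rightarrow> nat) \<Rightarrow> 'o \<Rightarrow> complex vec \<Rightarrow> complex vec \<Rightarrow> 'o \<Rightarrow> nat \<Rightarrow> nat \<Rightarrow> complex" where
  "ptensor dB dR M \<sigma> \<omega> = (\<lambda>X i j. if X = M \<and> i < dB M \<and> j < dR M then \<sigma> $ i * \<omega> $ j else 0)"

definition period_relations ::
  "('o, 'm, 'x) qcat_scheme \<Rightarrow> complex set \<Rightarrow> ('o \<Rightarrow> nat) \<Rightarrow> ('m \<Rightarrow> complex mat) \<Rightarrow> ('o \<Rightarrow> nat) \<Rightarrow>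
   ('m \<Rightarrow> complex mat) \<Rightarrow> ('o \<Rightarrow> nat \<Rightarrow> nat \<Rightarrow> complex) set" where
  "period_relations C K dB HB dR HdR =
     {ptensor dB dR M \<sigma> (dual_map (HdR \<alpha>) \<omega>) - ptensor dB dR N (HB \<alpha> *\<^sub>v \<sigma>) \<omega> | M N \<alpha> \<sigma> \<omega>.
        \<alpha> \<in> hom C M N \<and> \<sigma> \<in> Fvec \<rat> (dB M) \<and> \<omega> \<in> Fvec K (dR N)}"

definition Kspan :: "complex set \<Rightarrow> ('o \<Rightarrow> nat \<Rightarrow> nat \<Rightarrow> complex) set \<Rightarrow> ('o \<Rightarrow> nat \<Rightarrow> nat \<Rightarrow> complex) set" where
  "Kspan K S = {sum_list (map (\<lambda>(c, r). (\<lambda>X i j. c * r X i j)) L) | L. set L \<subseteq> K \<times> S}"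

text \<open>Injectivity of eval_int : P(A) -> C, i.e. every element
  sum_k (sigma_k (x) omega_k)_(M_k) of the direct sum with sum_k int_(sigma_k) omega_k = 0
  lies in the K-span of the relations.\<close>
definition period_conjecture ::
  "('o, 'm, 'x) qcat_scheme \<Rightarrow> complex set \<Rightarrow> ('o \<Rightarrow> nat) \<Rightarrow> ('m \<Rightarrow> complex mat) \<Rightarrow> ('o \<Rightarrow> nat) \<Rightarrow>
   ('m \<Rightarrow> complex mat) \<Rightarrow> ('o \<Rightarrow> complex mat) \<Rightarrow> bool" where
  "period_conjecture C K dB HB dR HdR I \<longleftrightarrow>
     (\<forall>L :: ('o \<times> complex vec \<times> complex vec) list.
        (\<forall>(M, \<sigma>, \<omega>) \<in> set L. \<sigma> \<in> Fvec \<rat> (dB M) \<and> \<omega> \<in> Fvec K (dR M)) \<longrightarrow>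
        sum_list (map (\<lambda>(M, \<sigma>, \<omega>). period I M \<sigma> \<omega>) L) = 0 \<longrightarrow>
        sum_list (map (\<lambda>(M, \<sigma>, \<omega>). ptensor dB dR M \<sigma> \<omega>) L)
          \<in> Kspan K (period_relations C K dB HB dR HdR))"

end

theory Submission
  imports Defs
begin

lemma ex1_eq: "\<exists>!x. P x \<Longrightarrow> P a \<Longrightarrow> P b \<Longrightarrow> a = b" by blast

locale QAB =
  fixes C :: "('o, 'm) qcat"
  assumes qab: "Qlinear_abelian C"
begin

abbreviation "dm \<equiv> cdom C"
abbreviation "cd \<equiv> ccod C"
abbreviation "cmp \<equiv> ccomp C"
abbreviation "zr \<equiv> czero C"
abbreviation "ad \<equiv> cadd C"
abbreviation "ng f \<equiv> csmul C (-1) f"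

lemma cat: "is_category C" and lin: "is_Qlinear C"
  using qab unfolding Qlinear_abelian_def by auto

lemma hom_iff: "f \<in> hom C X Y \<longleftrightarrow> dm f = X \<and> cd f = Y"
  unfolding hom_def by auto

lemma in_hom[simp]: "f \<in> hom C (dm f) (cd f)" by (simp add: hom_iff)

lemma comp_hom: "f \<in> hom C X Y \<Longrightarrow> g \<in> hom C Y Z \<Longrightarrow> cmp g f \<in> hom C X Z"
  using cat unfolding is_category_def by blast

lemma dom_comp[simp]: "cd f = dm g \<Longrightarrow> dm (cmp g f) = dm f"
  using comp_hom[of f "dm f" "cd f" g "cd g"] by (simp add: hom_iff)
lemma cod_comp[simp]: "cd f = dm g \<Longrightarrow> cd (cmp g f) = cd g"
  using comp_hom[of f "dm f" "cd f" g "cd g"] by (simp add: hom_iff)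

lemma id_hom: "cid C X \<in> hom C X X" using cat unfolding is_category_def by blast
lemma dom_id[simp]: "dm (cid C X) = X" and cod_id[simp]: "cd (cid C X) = X"
  using id_hom[of X] by (auto simp: hom_iff)

lemma comp_id_right[simp]: "cmp f (cid C (dm f)) = f"
  using cat unfolding is_category_def by (meson in_hom)
lemma comp_id_left[simp]: "cmp (cid C (cd f)) f = f"
  using cat unfolding is_category_def by (meson in_hom)

lemma comp_assoc: "cd f = dm g \<Longrightarrow> cd g = dm h \<Longrightarrow>
   cmp h (cmp g f) = cmp (cmp h g) f"
  using cat unfolding is_category_def by (metis in_hom)

lemma zero_hom: "zr X Y \<in> hom C X Y" using lin unfolding is_Qlinear_def by simp
lemma dom_zero[simp]: "dm (zr X Y) = X" and cod_zero[simp]: "cd (zr X Y) = Y"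
  using zero_hom[of X Y] by (auto simp: hom_iff)

lemma add_hom: "f \<in> hom C X Y \<Longrightarrow> g \<in> hom C X Y \<Longrightarrow> ad f g \<in> hom C X Y"
  using lin unfolding is_Qlinear_def by simp
lemma smul_hom: "f \<in> hom C X Y \<Longrightarrow> csmul C q f \<in> hom C X Y"
  using lin unfolding is_Qlinear_def by simp

lemma add_assoc: "f \<in> hom C X Y \<Longrightarrow> g \<in> hom C X Y \<Longrightarrow> h \<in> hom C X Y \<Longrightarrow>
   ad (ad f g) h = ad f (ad g h)"
  using lin unfolding is_Qlinear_def by simp
lemma add_comm: "f \<in> hom C X Y \<Longrightarrow> g \<in> hom C X Y \<Longrightarrow> ad f g = ad g f"
  using lin unfolding is_Qlinear_def by simp
lemma add_zero_left: "f \<in> hom C X Y \<Longrightarrow> ad (zr X Y) f = f"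
  using lin unfolding is_Qlinear_def by simp
lemma add_neg: "f \<in> hom C X Y \<Longrightarrow> ad f (ng f) = zr X Y"
  using lin unfolding is_Qlinear_def by simp
lemma add_zero_right: "f \<in> hom C X Y \<Longrightarrow> ad f (zr X Y) = f"
  using add_zero_left add_comm zero_hom by metis

lemma comp_add_right: "f \<in> hom C X Y \<Longrightarrow> f' \<in> hom C X Y \<Longrightarrow> g \<in> hom C Y Z \<Longrightarrow>
   cmp g (ad f f') = ad (cmp g f) (cmp g f')"
  using lin unfolding is_Qlinear_def by simp
lemma comp_add_left: "f \<in> hom C X Y \<Longrightarrow> g \<in> hom C Y Z \<Longrightarrow> g' \<in> hom C Y Z \<Longrightarrow>
   cmp (ad g g') f = ad (cmp g f) (cmp g' f)"
  using lin unfolding is_Qlinear_def by simp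
lemma comp_smul_right: "f \<in> hom C X Y \<Longrightarrow> g \<in> hom C Y Z \<Longrightarrow>
   cmp g (csmul C a f) = csmul C a (cmp g f)"
  using lin unfolding is_Qlinear_def by simp
lemma comp_smul_left: "f \<in> hom C X Y \<Longrightarrow> g \<in> hom C Y Z \<Longrightarrow>
   cmp (csmul C a g) f = csmul C a (cmp g f)"
  using lin unfolding is_Qlinear_def by simp

lemma add_cancel_zero:
  assumes f: "f \<in> hom C X Y" and g: "g \<in> hom C X Y" and e: "ad f g = f"
  shows "g = zr X Y"
proof -
  have nf: "ng f \<in> hom C X Y" by (rule smul_hom[OF f])
  have "g = ad (zr X Y) g" using add_zero_left[OF g] by simp
  also have "\<dots> = ad (ad (ng f) f) g" using add_neg[OF f] add_comm[OF f nf] by simp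
  also have "\<dots> = ad (ng f) (ad f g)" using add_assoc[OF nf f g] .
  also have "\<dots> = ad (ng f) f" using e by simp
  also have "\<dots> = zr X Y" using add_neg[OF f] add_comm[OF f nf] by simp
  finally show ?thesis .
qed

lemma add_neg_eq:
  assumes f: "f \<in> hom C X Y" and g: "g \<in> hom C X Y" and e: "ad f (ng g) = zr X Y"
  shows "f = g"
proof -
  have ng: "ng g \<in> hom C X Y" by (rule smul_hom[OF g])
  have "f = ad f (zr X Y)" using add_zero_right[OF f] by simp
  also have "\<dots> = ad f (ad (ng g) g)" using add_neg[OF g] add_comm[OF g ng] by simp
  also have "\<dots> = ad (ad f (ng g)) g" using add_assoc[OF f ng g] by simp
  also have "\<dots> = g" using e add_zero_left[OF g] by simp
  finally show ?thesis .
qed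

lemma zero_add_zero: "ad (zr X Y) (zr X Y) = zr X Y"
  using add_zero_left zero_hom by blast

lemma comp_zero_right:
  assumes g: "g \<in> hom C Y Z" shows "cmp g (zr X Y) = zr X Z"
proof -
  have h: "cmp g (zr X Y) \<in> hom C X Z" using comp_hom[OF zero_hom g] .
  have "ad (cmp g (zr X Y)) (cmp g (zr X Y)) = cmp g (zr X Y)"
    using comp_add_right[OF zero_hom zero_hom g, of X] zero_add_zero by simp
  thus ?thesis using add_cancel_zero[OF h h] by simp
qed

lemma comp_zero_left:
  assumes f: "f \<in> hom C X Y" shows "cmp (zr Y Z) f = zr X Z"
proof -
  have h: "cmp (zr Y Z) f \<in> hom C X Z" using comp_hom[OF f zero_hom] .
  have "ad (cmp (zr Y Z) f) (cmp (zr Y Z) f) = cmp (zr Y Z) f"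
    using comp_add_left[OF f zero_hom zero_hom, of Z] zero_add_zero by simp
  thus ?thesis using add_cancel_zero[OF h h] by simp
qed

lemma comp_zero_right': "dm g = Y \<Longrightarrow> cmp g (zr X Y) = zr X (cd g)"
  using comp_zero_right[of g Y "cd g"] by (simp add: hom_iff)
lemma comp_zero_left': "cd f = Y \<Longrightarrow> cmp (zr Y Z) f = zr (dm f) Z"
  using comp_zero_left[of f "dm f" Y] by (simp add: hom_iff)

lemma mono_by_zero:
  assumes "\<And>u. cd u = dm m \<Longrightarrow> cmp m u = zr (dm u) (cd m) \<Longrightarrow> u = zr (dm u) (dm m)"
  shows "is_mono C m"
  unfolding is_mono_def
proof (intro allI impI)
  fix g h assume a: "cd g = dm m \<and> cd h = dm m \<and> dm g = dm h \<and> cmp m g = cmp m h"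
  let ?X = "dm g" let ?Y = "dm m" let ?Z = "cd m"
  have g: "g \<in> hom C ?X ?Y" and h: "h \<in> hom C ?X ?Y" using a by (auto simp: hom_iff)
  have m: "m \<in> hom C ?Y ?Z" by simp
  have nh: "ng h \<in> hom C ?X ?Y" using smul_hom[OF h] .
  have u: "ad g (ng h) \<in> hom C ?X ?Y" using add_hom[OF g nh] .
  have "cmp m (ad g (ng h)) = ad (cmp m g) (ng (cmp m h))"
    using comp_add_right[OF g nh m] comp_smul_right[OF h m] by simp
  also have "\<dots> = zr ?X ?Z" using a add_neg[OF comp_hom[OF h m]] by simp
  finally have "ad g (ng h) = zr ?X ?Y" using assms[of "ad g (ng h)"] u by (simp add: hom_iff)
  thus "g = h" using add_neg_eq[OF g h] by simp
qed

lemma epi_by_zero: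
  assumes "\<And>u. dm u = cd m \<Longrightarrow> cmp u m = zr (dm m) (cd u) \<Longrightarrow> u = zr (cd m) (cd u)"
  shows "is_epi C m"
  unfolding is_epi_def
proof (intro allI impI)
  fix g h assume a: "dm g = cd m \<and> dm h = cd m \<and> cd g = cd h \<and> cmp g m = cmp h m"
  let ?X = "dm m" let ?Y = "cd m" let ?Z = "cd g"
  have g: "g \<in> hom C ?Y ?Z" and h: "h \<in> hom C ?Y ?Z" using a by (auto simp: hom_iff)
  have m: "m \<in> hom C ?X ?Y" by simp
  have nh: "ng h \<in> hom C ?Y ?Z" using smul_hom[OF h] .
  have u: "ad g (ng h) \<in> hom C ?Y ?Z" using add_hom[OF g nh] .
  have "cmp (ad g (ng h)) m = ad (cmp g m) (ng (cmp h m))"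
    using comp_add_left[OF m g nh] comp_smul_left[OF m h] by simp
  also have "\<dots> = zr ?X ?Z" using a add_neg[OF comp_hom[OF m h]] by simp
  finally have "ad g (ng h) = zr ?Y ?Z" using assms[of "ad g (ng h)"] u by (simp add: hom_iff)
  thus "g = h" using add_neg_eq[OF g h] by simp
qed

lemma kernel_mono: assumes k: "is_kernel C k f" shows "is_mono C k"
  unfolding is_mono_def
proof (intro allI impI)
  fix g h assume a: "cd g = dm k \<and> cd h = dm k \<and> dm g = dm h \<and> cmp k g = cmp k h"
  have kf: "cd k = dm f" "cmp f k = zr (dm k) (cd f)" using k unfolding is_kernel_def by auto
  let ?g = "cmp k g"
  have c1: "cd ?g = dm f" using a kf by simp
  have c2: "cmp f ?g = zr (dm ?g) (cd f)"
    using a kf comp_assoc[of g k f] comp_zero_left'[of g] by simp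
  have "\<exists>!x. x \<in> hom C (dm ?g) (dm k) \<and> cmp k x = ?g"
    using k c1 c2 unfolding is_kernel_def by blast
  moreover have "g \<in> hom C (dm ?g) (dm k)" "h \<in> hom C (dm ?g) (dm k)"
    using a by (auto simp: hom_iff)
  ultimately show "g = h" using a by (intro ex1_eq[where P="\<lambda>x. x \<in> hom C (dm ?g) (dm k) \<and> cmp k x = ?g"]) auto
qed

lemma cokernel_epi: assumes c: "is_cokernel C c f" shows "is_epi C c"
  unfolding is_epi_def
proof (intro allI impI)
  fix g h assume a: "dm g = cd c \<and> dm h = cd c \<and> cd g = cd h \<and> cmp g c = cmp h c"
  have cf: "dm c = cd f" "cmp c f = zr (dm f) (cd c)" using c unfolding is_cokernel_def by auto
  let ?g = "cmp g c"
  have c1: "dm ?g = cd f" using a cf by simp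
  have c2: "cmp ?g f = zr (dm f) (cd ?g)"
    using a cf comp_assoc[of f c g] comp_zero_right'[of g] by simp
  have "\<exists>!x. x \<in> hom C (cd c) (cd ?g) \<and> cmp x c = ?g"
    using c c1 c2 unfolding is_cokernel_def by blast
  moreover have "g \<in> hom C (cd c) (cd ?g)" "h \<in> hom C (cd c) (cd ?g)"
    using a by (auto simp: hom_iff)
  ultimately show "g = h" using a by (intro ex1_eq[where P="\<lambda>x. x \<in> hom C (cd c) (cd ?g) \<and> cmp x c = ?g"]) auto
qed


lemma kernelD: assumes "is_kernel C k f" shows "cd k = dm f" "cmp f k = zr (dm k) (cd f)"
  using assms unfolding is_kernel_def by auto
lemma kernel_factor: assumes "is_kernel C k f" "cd g = dm f" "cmp f g = zr (dm g) (cd f)"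
  obtains h where "h \<in> hom C (dm g) (dm k)" "cmp k h = g"
  using assms unfolding is_kernel_def by metis
lemma cokernelD: assumes "is_cokernel C c f" shows "dm c = cd f" "cmp c f = zr (dm f) (cd c)"
  using assms unfolding is_cokernel_def by auto
lemma cokernel_factor: assumes "is_cokernel C c f" "dm g = cd f" "cmp g f = zr (dm f) (cd g)"
  obtains h where "h \<in> hom C (cd c) (cd g)" "cmp h c = g"
  using assms unfolding is_cokernel_def by metis

lemma ex_kernel: "\<exists>k. is_kernel C k f" using qab unfolding Qlinear_abelian_def by blast
lemma ex_cokernel: "\<exists>c. is_cokernel C c f" using qab unfolding Qlinear_abelian_def by blast
lemma mono_kernel: "is_mono C f \<Longrightarrow> \<exists>g. is_kernel C f g" using qab unfolding Qlinear_abelian_def by blast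
lemma epi_cokernel: "is_epi C f \<Longrightarrow> \<exists>g. is_cokernel C f g" using qab unfolding Qlinear_abelian_def by blast

lemma mono_ses: assumes s: "is_mono C s" and c: "is_cokernel C c s" shows "short_exact C s c"
proof -
  obtain g where g: "is_kernel C s g" using mono_kernel[OF s] by blast
  note gD = kernelD[OF g] and cD = cokernelD[OF c]
  obtain h where h: "h \<in> hom C (cd c) (cd g)" "cmp h c = g"
    using cokernel_factor[OF c, of g] gD cD by (auto simp: comp_zero_right')
  have "is_kernel C s c" unfolding is_kernel_def
  proof (intro conjI allI impI)
    show "cd s = dm c" using cD by simp
    show "cmp c s = zr (dm s) (cd c)" using cD by simp
    fix t assume t: "cd t = dm c \<and> cmp c t = zr (dm t) (cd c)"
    have hc: "dm h = cd c" "cd h = cd g" using h by (auto simp: hom_iff)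
    have "cmp g t = cmp h (cmp c t)" using h(2)[symmetric] comp_assoc[of t c h] t hc by simp
    also have "\<dots> = zr (dm t) (cd g)" using t hc comp_zero_right' by simp
    finally have gt: "cmp g t = zr (dm t) (cd g)" .
    have ct: "cd t = dm g" using t gD cD by simp
    show "\<exists>!x. x \<in> hom C (dm t) (dm s) \<and> cmp s x = t"
      using g ct gt unfolding is_kernel_def by blast
  qed
  thus ?thesis using c unfolding short_exact_def by simp
qed

lemma epi_ses: assumes p: "is_epi C p" and k: "is_kernel C k p" shows "short_exact C k p"
proof -
  obtain f where f: "is_cokernel C p f" using epi_cokernel[OF p] by blast
  note fD = cokernelD[OF f] and kD = kernelD[OF k]
  obtain h where h: "h \<in> hom C (dm f) (dm k)" "cmp k h = f"
    using kernel_factor[OF k, of f] fD kD by (auto simp: comp_zero_left')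
  have "is_cokernel C p k" unfolding is_cokernel_def
  proof (intro conjI allI impI)
    show "dm p = cd k" using kD by simp
    show "cmp p k = zr (dm k) (cd p)" using kD by simp
    fix t assume t: "dm t = cd k \<and> cmp t k = zr (dm k) (cd t)"
    have hc: "dm h = dm f" "cd h = dm k" using h by (auto simp: hom_iff)
    have "cmp t f = cmp (cmp t k) h" using h(2)[symmetric] comp_assoc[of h k t] t hc by simp
    also have "\<dots> = zr (dm f) (cd t)" using t hc comp_zero_left' by simp
    finally have ft: "cmp t f = zr (dm f) (cd t)" .
    have ct: "dm t = cd f" using t fD kD by simp
    show "\<exists>!x. x \<in> hom C (cd p) (cd t) \<and> cmp x p = t"
      using f ct ft unfolding is_cokernel_def by blast
  qed
  thus ?thesis using k unfolding short_exact_def by simp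
qed

lemma epi_comp: assumes p: "is_epi C p" and q: "is_epi C q" and pq: "cd p = dm q"
  shows "is_epi C (cmp q p)"
  unfolding is_epi_def
proof (intro allI impI)
  fix g h assume a: "dm g = cd (cmp q p) \<and> dm h = cd (cmp q p) \<and> cd g = cd h \<and> cmp g (cmp q p) = cmp h (cmp q p)"
  have a': "dm g = cd q" "dm h = cd q" using a pq by auto
  have "cmp (cmp g q) p = cmp (cmp h q) p" using a a' comp_assoc[of p q g] comp_assoc[of p q h] pq by simp
  hence "cmp g q = cmp h q" using p a a' pq unfolding is_epi_def by simp
  thus "g = h" using q a a' unfolding is_epi_def by simp
qed

lemma split_mono: assumes "cmp y q = cid C (dm q)" "cd q = dm y" shows "is_mono C q"
  unfolding is_mono_def
proof (intro allI impI)
  fix g h assume a: "cd g = dm q \<and> cd h = dm q \<and> dm g = dm h \<and> cmp q g = cmp q h"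
  have "g = cmp (cmp y q) g" using assms a by (metis comp_id_left)
  also have "\<dots> = cmp y (cmp q g)" using comp_assoc[of g q y] a assms by simp
  also have "\<dots> = cmp y (cmp q h)" using a by simp
  also have "\<dots> = cmp (cmp y q) h" using comp_assoc[of h q y] a assms by simp
  also have "\<dots> = h" using assms a by (metis comp_id_left)
  finally show "g = h" .
qed

lemma image_fact:
  assumes k: "is_kernel C k h" and c: "is_cokernel C c k"
  shows "\<exists>m. m \<in> hom C (cd c) (cd h) \<and> cmp m c = h \<and> is_mono C m"
proof -
  note kD = kernelD[OF k] and cD = cokernelD[OF c]
  obtain m where m: "m \<in> hom C (cd c) (cd h)" "cmp m c = h"
    using cokernel_factor[OF c, of h] kD cD by auto
  have mc: "dm m = cd c" "cd m = cd h" using m by (auto simp: hom_iff)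
  have cepi: "is_epi C c" using cokernel_epi[OF c] .
  have "is_mono C m"
  proof (rule mono_by_zero)
    fix u assume u: "cd u = dm m" "cmp m u = zr (dm u) (cd m)"
    obtain q where q: "is_cokernel C q u" using ex_cokernel by blast
    note qD = cokernelD[OF q]
    obtain m2 where m2: "m2 \<in> hom C (cd q) (cd m)" "cmp m2 q = m"
      using cokernel_factor[OF q, of m] u by auto
    have m2c: "dm m2 = cd q" "cd m2 = cd m" using m2 by (auto simp: hom_iff)
    have qepi: "is_epi C q" using cokernel_epi[OF q] .
    have cq: "cd c = dm q" using qD u mc by simp
    let ?qc = "cmp q c"
    have qcepi: "is_epi C ?qc" using epi_comp[OF cepi qepi cq] .
    obtain l where l: "is_kernel C l ?qc" using ex_kernel by blast
    have ses: "short_exact C l ?qc" using epi_ses[OF qcepi l] .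
    hence lcok: "is_cokernel C ?qc l" unfolding short_exact_def by simp
    note lD = kernelD[OF l]
    have dqc: "dm ?qc = dm c" "cd ?qc = cd q" using cq by auto
    have "cmp h l = cmp (cmp m2 (cmp q c)) l"
      using m(2) m2(2) comp_assoc[of c q m2] cq m2c by simp
    also have "\<dots> = cmp m2 (cmp ?qc l)" using comp_assoc[of l ?qc m2] lD dqc m2c by simp
    also have "\<dots> = zr (dm l) (cd h)" using lD dqc m2c mc comp_zero_right' by simp
    finally have hl: "cmp h l = zr (dm l) (cd h)" .
    have lh: "cd l = dm h" using lD dqc cD kD by simp
    obtain l' where l': "l' \<in> hom C (dm l) (dm k)" "cmp k l' = l"
      using kernel_factor[OF k lh hl] .
    have l'c: "dm l' = dm l" "cd l' = dm k" using l' by (auto simp: hom_iff)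
    have "cmp c l = cmp (cmp c k) l'" using l'(2)[symmetric] comp_assoc[of l' k c] l'c cD by simp
    also have "\<dots> = zr (dm l) (cd c)" using cD l'c comp_zero_left' by simp
    finally have cl: "cmp c l = zr (dm l) (cd c)" .
    obtain y where y: "y \<in> hom C (cd ?qc) (cd c)" "cmp y ?qc = c"
      using cokernel_factor[OF lcok, of c] cl lD dqc by auto
    have yc: "dm y = cd q" "cd y = cd c" using y dqc by (auto simp: hom_iff)
    have "cmp (cmp y q) c = cmp (cid C (cd c)) c"
      using y(2) comp_assoc[of c q y] cq yc comp_id_left[of c] by simp
    hence yq: "cmp y q = cid C (cd c)"
      using cepi yc cq unfolding is_epi_def by simp
    have cu: "cd u = cd c" using u mc by simp
    have "u = cmp (cmp y q) u" unfolding yq cu[symmetric] by simp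
    also have "\<dots> = cmp y (cmp q u)" using comp_assoc[of u q y] qD(1) yc(1) by simp
    also have "\<dots> = zr (dm u) (cd y)" using qD(2) yc(1) comp_zero_right'[of y] by simp
    finally show "u = zr (dm u) (dm m)" using yc mc by simp
  qed
  thus ?thesis using m by blast
qed

end


lemma subfield_sum: assumes "subfield_C F" "finite S" "\<And>i. i \<in> S \<Longrightarrow> f i \<in> F"
  shows "sum f S \<in> F"
  using assms(2,3)
proof (induction S rule: finite_induct)
  case empty then show ?case using assms(1) unfolding subfield_C_def by simp
next
  case (insert x S) then show ?case using assms(1) unfolding subfield_C_def by simp
qed

lemma subfield_mult: "subfield_C F \<Longrightarrow> a \<in> F \<Longrightarrow> b \<in> F \<Longrightarrow> a * b \<in> F"
  unfolding subfield_C_def by simp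
lemma subfield_add: "subfield_C F \<Longrightarrow> a \<in> F \<Longrightarrow> b \<in> F \<Longrightarrow> a + b \<in> F"
  unfolding subfield_C_def by simp
lemma subfield_uminus: "subfield_C F \<Longrightarrow> a \<in> F \<Longrightarrow> - a \<in> F"
  unfolding subfield_C_def by simp
lemma subfield_0: "subfield_C F \<Longrightarrow> 0 \<in> F" unfolding subfield_C_def by simp
lemma subfield_1: "subfield_C F \<Longrightarrow> 1 \<in> F" unfolding subfield_C_def by simp

lemma subfield_Rats: "subfield_C \<rat>"
  unfolding subfield_C_def by auto

lemma Fvec_carrier: "v \<in> Fvec F n \<Longrightarrow> v \<in> carrier_vec n" unfolding Fvec_def by simp
lemma Fmat_carrier: "A \<in> Fmat F n m \<Longrightarrow> A \<in> carrier_mat n m" unfolding Fmat_def by simp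

lemma Fmat_mult_vec: assumes F: "subfield_C F" and A: "A \<in> Fmat F n m" and v: "v \<in> Fvec F m"
  shows "A *\<^sub>v v \<in> Fvec F n"
proof -
  have Ac: "A \<in> carrier_mat n m" and vc: "v \<in> carrier_vec m" using A v unfolding Fmat_def Fvec_def by auto
  have "(A *\<^sub>v v) $ i \<in> F" if i: "i < n" for i
  proof -
    have "(A *\<^sub>v v) $ i = (\<Sum>j\<in>{0..<m}. A $$ (i,j) * v $ j)"
      using Ac vc i by (simp add: scalar_prod_def)
    also have "\<dots> \<in> F" using A v i F unfolding Fmat_def Fvec_def
      by (intro subfield_sum[OF F]) (auto intro!: subfield_mult[OF F])
    finally show ?thesis .
  qed
  thus ?thesis using Ac vc unfolding Fvec_def by auto
qed

lemma zero_Fvec: "subfield_C F \<Longrightarrow> 0\<^sub>v n \<in> Fvec F n"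
  unfolding Fvec_def subfield_C_def by auto

lemma unit_Fvec: "subfield_C F \<Longrightarrow> i < n \<Longrightarrow> unit_vec n i \<in> Fvec F n"
  unfolding Fvec_def subfield_C_def by (auto simp: unit_vec_def)

locale FF = QAB C for C :: "('o, 'm) qcat" +
  fixes F :: "complex set" and d :: "'o \<Rightarrow> nat" and H :: "'m \<Rightarrow> complex mat"
  assumes sub: "subfield_C F" and ff: "fiber_functor C F d H"
begin

lemma H_Fmat: "H f \<in> Fmat F (d (cd f)) (d (dm f))"
  using ff unfolding fiber_functor_def by simp
lemma H_carrier: "H f \<in> carrier_mat (d (cd f)) (d (dm f))"
  using H_Fmat Fmat_carrier by blast
lemma H_dims[simp]: "dim_row (H f) = d (cd f)" "dim_col (H f) = d (dm f)"
  using H_carrier[of f] by auto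
lemma H_id[simp]: "H (cid C X) = 1\<^sub>m (d X)"
  using ff unfolding fiber_functor_def by simp
lemma H_comp: "cd f = dm g \<Longrightarrow> H (cmp g f) = H g * H f"
  using ff unfolding fiber_functor_def by simp
lemma H_add: "f \<in> hom C X Y \<Longrightarrow> g \<in> hom C X Y \<Longrightarrow> H (ad f g) = H f + H g"
  using ff unfolding fiber_functor_def by simp
lemma H_smul: "H (csmul C q f) = of_rat q \<cdot>\<^sub>m H f"
  using ff unfolding fiber_functor_def by simp
lemma H_faithful: "f \<in> hom C X Y \<Longrightarrow> g \<in> hom C X Y \<Longrightarrow> H f = H g \<Longrightarrow> f = g"
  using ff unfolding fiber_functor_def by simp

lemma H_zero_entry: fixes A :: "complex mat" assumes c: "A \<in> carrier_mat n m" and e: "A = A + A"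
  shows "A = 0\<^sub>m n m"
proof (rule eq_matI)
  fix i j assume ij: "i < dim_row (0\<^sub>m n m :: complex mat)" "j < dim_col (0\<^sub>m n m :: complex mat)"
  have "A $$ (i,j) = (A + A) $$ (i,j)" using arg_cong[OF e, of "\<lambda>A. A $$ (i,j)"] .
  also have "\<dots> = A $$ (i,j) + A $$ (i,j)" using c ij by simp
  finally have "A $$ (i,j) = 0" by (rule add_cancel_right_right[THEN iffD1])
  thus "A $$ (i,j) = 0\<^sub>m n m $$ (i,j)" using ij by simp
next
  show "dim_row A = dim_row (0\<^sub>m n m :: complex mat)" using c by simp
  show "dim_col A = dim_col (0\<^sub>m n m :: complex mat)" using c by simp
qed

lemma H_zero[simp]: "H (zr X Y) = 0\<^sub>m (d Y) (d X)"
proof -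
  have c: "H (zr X Y) \<in> carrier_mat (d Y) (d X)" using H_carrier[of "zr X Y"] by simp
  have e: "H (zr X Y) = H (zr X Y) + H (zr X Y)"
    using H_add[OF zero_hom zero_hom, of X Y] unfolding zero_add_zero .
  show ?thesis using H_zero_entry[OF c e] .
qed

lemma H_mult_vec_comp: assumes "cd f = dm g" "v \<in> carrier_vec (d (dm f))" shows
   "H (cmp g f) *\<^sub>v v = H g *\<^sub>v (H f *\<^sub>v v)"
proof -
  have "H g \<in> carrier_mat (d (cd g)) (d (cd f))" using H_carrier[of g] assms(1) by simp
  note a = assoc_mult_mat_vec[OF this H_carrier[of f] assms(2)]
  show ?thesis unfolding H_comp[OF assms(1)] by (rule a)
qed

lemma H_vec: "v \<in> Fvec F (d (dm f)) \<Longrightarrow> H f *\<^sub>v v \<in> Fvec F (d (cd f))"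
  by (rule Fmat_mult_vec[OF sub H_Fmat])

lemma ses_inj: "short_exact C s p \<Longrightarrow> v \<in> Fvec F (d (dm s)) \<Longrightarrow> H s *\<^sub>v v = 0\<^sub>v (d (cd s)) \<Longrightarrow> v = 0\<^sub>v (d (dm s))"
  using ff unfolding fiber_functor_def by simp
lemma ses_surj: "short_exact C s p \<Longrightarrow> w \<in> Fvec F (d (cd p)) \<Longrightarrow> \<exists>v\<in>Fvec F (d (dm p)). H p *\<^sub>v v = w"
  using ff unfolding fiber_functor_def by simp
lemma ses_exact: "short_exact C s p \<Longrightarrow> v \<in> Fvec F (d (dm p)) \<Longrightarrow>
    H p *\<^sub>v v = 0\<^sub>v (d (cd p)) \<longleftrightarrow> (\<exists>u\<in>Fvec F (d (dm s)). H s *\<^sub>v u = v)"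
  using ff unfolding fiber_functor_def by simp

lemma mono_inj: assumes m: "is_mono C m" and v: "v \<in> Fvec F (d (dm m))" "H m *\<^sub>v v = 0\<^sub>v (d (cd m))"
  shows "v = 0\<^sub>v (d (dm m))"
proof -
  obtain c where c: "is_cokernel C c m" using ex_cokernel by blast
  show ?thesis using ses_inj[OF mono_ses[OF m c] v] .
qed

lemma left_exact: assumes k: "is_kernel C k h" and v: "v \<in> Fvec F (d (dm h))"
  and hv: "H h *\<^sub>v v = 0\<^sub>v (d (cd h))"
  shows "\<exists>u\<in>Fvec F (d (dm k)). H k *\<^sub>v u = v"
proof -
  obtain c where c: "is_cokernel C c k" using ex_cokernel by blast
  obtain m where m: "m \<in> hom C (cd c) (cd h)" "cmp m c = h" "is_mono C m"
    using image_fact[OF k c] by blast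
  have mc: "dm m = cd c" "cd m = cd h" using m by (auto simp: hom_iff)
  have ses: "short_exact C k c" using mono_ses[OF kernel_mono[OF k] c] .
  note kD = kernelD[OF k] and cD = cokernelD[OF c]
  have dc: "dm c = dm h" using kD cD by simp
  have vc: "v \<in> Fvec F (d (dm c))" using v dc by simp
  have cv: "H c *\<^sub>v v \<in> Fvec F (d (dm m))" using H_vec[OF vc] mc by simp
  have "H m *\<^sub>v (H c *\<^sub>v v) = H (cmp m c) *\<^sub>v v"
    using H_mult_vec_comp[of c m v] mc Fvec_carrier[OF vc] by simp
  also have "\<dots> = H h *\<^sub>v v" using m(2) by simp
  finally have "H m *\<^sub>v (H c *\<^sub>v v) = 0\<^sub>v (d (cd m))" using hv mc by simp
  hence "H c *\<^sub>v v = 0\<^sub>v (d (dm m))" using mono_inj[OF m(3) cv] by simp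
  hence "H c *\<^sub>v v = 0\<^sub>v (d (cd c))" using mc by simp
  thus ?thesis using ses_exact[OF ses vc] by blast
qed

lemma image_ses: "\<exists>N' N s p. s \<in> hom C N' (cd h) \<and> p \<in> hom C (cd h) N \<and> short_exact C s p \<and>
   (\<forall>v\<in>Fvec F (d (dm h)). \<exists>u\<in>Fvec F (d N'). H s *\<^sub>v u = H h *\<^sub>v v) \<and>
   (\<forall>u\<in>Fvec F (d N'). \<exists>v\<in>Fvec F (d (dm h)). H s *\<^sub>v u = H h *\<^sub>v v)"
proof -
  obtain k where k: "is_kernel C k h" using ex_kernel by blast
  obtain c where c: "is_cokernel C c k" using ex_cokernel by blast
  obtain m where m: "m \<in> hom C (cd c) (cd h)" "cmp m c = h" "is_mono C m"
    using image_fact[OF k c] by blast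
  have mc: "dm m = cd c" "cd m = cd h" using m by (auto simp: hom_iff)
  obtain p where p: "is_cokernel C p m" using ex_cokernel by blast
  have sesm: "short_exact C m p" using mono_ses[OF m(3) p] .
  have ses: "short_exact C k c" using mono_ses[OF kernel_mono[OF k] c] .
  note kD = kernelD[OF k] and cD = cokernelD[OF c] and pD = cokernelD[OF p]
  have dc: "dm c = dm h" using kD cD by simp
  have eq: "H m *\<^sub>v (H c *\<^sub>v v) = H h *\<^sub>v v" if "v \<in> Fvec F (d (dm h))" for v
  proof -
    have "H m *\<^sub>v (H c *\<^sub>v v) = H (cmp m c) *\<^sub>v v"
      using H_mult_vec_comp[of c m v] mc Fvec_carrier[OF that] dc by simp
    thus ?thesis using m(2) by simp
  qed
  have A1: "\<forall>v\<in>Fvec F (d (dm h)). \<exists>u\<in>Fvec F (d (cd c)). H m *\<^sub>v u = H h *\<^sub>v v"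
  proof
    fix v assume v: "v \<in> Fvec F (d (dm h))"
    have "H c *\<^sub>v v \<in> Fvec F (d (cd c))" using H_vec[of v c] v dc by simp
    thus "\<exists>u\<in>Fvec F (d (cd c)). H m *\<^sub>v u = H h *\<^sub>v v"
      using eq[OF v] by blast
  qed
  have A2: "\<forall>u\<in>Fvec F (d (cd c)). \<exists>v\<in>Fvec F (d (dm h)). H m *\<^sub>v u = H h *\<^sub>v v"
  proof
    fix u assume u: "u \<in> Fvec F (d (cd c))"
    obtain v where v: "v \<in> Fvec F (d (dm c))" "H c *\<^sub>v v = u" using ses_surj[OF ses u] by blast
    have v': "v \<in> Fvec F (d (dm h))" using v dc by simp
    show "\<exists>v\<in>Fvec F (d (dm h)). H m *\<^sub>v u = H h *\<^sub>v v"
      using eq[OF v'] v(2) v' by blast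
  qed
  have hp: "p \<in> hom C (cd h) (cd p)" using pD mc by (simp add: hom_iff)
  show ?thesis
    apply (rule exI[of _ "cd c"], rule exI[of _ "cd p"], rule exI[of _ m], rule exI[of _ p])
    using m(1) hp sesm A1 A2 by simp
qed

end


lemma mv_entry: "A \<in> carrier_mat n m \<Longrightarrow> v \<in> carrier_vec m \<Longrightarrow> i < n \<Longrightarrow>
  (A *\<^sub>v v) $ i = (\<Sum>k<m. A $$ (i,k) * v $ k)"
  by (simp add: scalar_prod_def atLeast0LessThan)

context QAB begin

definition msum :: "'o \<Rightarrow> 'o \<Rightarrow> 'm list \<Rightarrow> 'm" where
  "msum X Y fs = foldr ad fs (zr X Y)"

lemma msum_hom: "(\<And>f. f \<in> set fs \<Longrightarrow> f \<in> hom C X Y) \<Longrightarrow> msum X Y fs \<in> hom C X Y"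
  by (induction fs) (auto simp: msum_def zero_hom add_hom)

lemma biprod2: "\<exists>S i1 i2 p1 p2. i1 \<in> hom C X S \<and> i2 \<in> hom C Y S \<and> p1 \<in> hom C S X \<and> p2 \<in> hom C S Y \<and>
        cmp p1 i1 = cid C X \<and> cmp p2 i2 = cid C Y \<and>
        cmp p1 i2 = zr Y X \<and> cmp p2 i1 = zr X Y"
  using qab unfolding Qlinear_abelian_def by meson

lemma biprod_list: "\<exists>S \<iota> \<pi>. (\<forall>i<length zs. \<iota> i \<in> hom C (zs!i) S \<and> \<pi> i \<in> hom C S (zs!i)) \<and>
   (\<forall>i<length zs. \<forall>j<length zs. cmp (\<pi> j) (\<iota> i) = (if i = j then cid C (zs!i) else zr (zs!i) (zs!j)))"
proof (induction zs)
  case Nil then show ?case by simp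
next
  case (Cons z zs)
  then obtain S \<iota> \<pi> where IH: "\<forall>i<length zs. \<iota> i \<in> hom C (zs!i) S \<and> \<pi> i \<in> hom C S (zs!i)"
   "\<forall>i<length zs. \<forall>j<length zs. cmp (\<pi> j) (\<iota> i) = (if i = j then cid C (zs!i) else zr (zs!i) (zs!j))"
    by blast
  obtain T i1 i2 p1 p2 where b: "i1 \<in> hom C z T" "i2 \<in> hom C S T" "p1 \<in> hom C T z" "p2 \<in> hom C T S"
        "cmp p1 i1 = cid C z" "cmp p2 i2 = cid C S"
        "cmp p1 i2 = zr S z" "cmp p2 i1 = zr z S"
    using biprod2[of z S] by blast
  define \<iota>' where "\<iota>' i = (if i = 0 then i1 else cmp i2 (\<iota> (i - 1)))" for i
  define \<pi>' where "\<pi>' i = (if i = 0 then p1 else cmp (\<pi> (i - 1)) p2)" for i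
  have h1: "\<iota>' i \<in> hom C ((z#zs)!i) T \<and> \<pi>' i \<in> hom C T ((z#zs)!i)" if "i < length (z#zs)" for i
  proof (cases i)
    case 0 then show ?thesis using b by (simp add: \<iota>'_def \<pi>'_def)
  next
    case (Suc k) then have "k < length zs" using that by simp
    then show ?thesis using IH(1) b Suc by (auto simp: \<iota>'_def \<pi>'_def intro: comp_hom)
  qed
  have h2: "cmp (\<pi>' j) (\<iota>' i) = (if i = j then cid C ((z#zs)!i) else zr ((z#zs)!i) ((z#zs)!j))"
    if ij: "i < length (z#zs)" "j < length (z#zs)" for i j
  proof (cases i)
    case 0 note i0 = 0
    then show ?thesis
    proof (cases j)
      case 0 then show ?thesis using i0 b by (simp add: \<iota>'_def \<pi>'_def)
    next
      case (Suc l) then have l: "l < length zs" using ij by simp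
      have pl: "\<pi> l \<in> hom C S (zs!l)" using IH(1) l by blast
      have "cmp (\<pi>' j) (\<iota>' i) = cmp (cmp (\<pi> l) p2) i1" using i0 Suc by (simp add: \<iota>'_def \<pi>'_def)
      also have "\<dots> = cmp (\<pi> l) (cmp p2 i1)" using comp_assoc[of i1 p2 "\<pi> l"] b pl by (simp add: hom_iff)
      also have "\<dots> = zr z (zs!l)" using b(8) comp_zero_right[OF pl] by simp
      finally show ?thesis using i0 Suc by simp
    qed
  next
    case (Suc k) note ik = this
    then have k: "k < length zs" using ij by simp
    have ik': "\<iota> k \<in> hom C (zs!k) S" using IH(1) k by blast
    show ?thesis
    proof (cases j)
      case 0
      have "cmp (\<pi>' j) (\<iota>' i) = cmp p1 (cmp i2 (\<iota> k))" using 0 ik by (simp add: \<iota>'_def \<pi>'_def)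
      also have "\<dots> = cmp (cmp p1 i2) (\<iota> k)" using comp_assoc[of "\<iota> k" i2 p1] b ik' by (simp add: hom_iff)
      also have "\<dots> = zr (zs!k) z" using b(7) comp_zero_left[OF ik'] by simp
      finally show ?thesis using 0 ik by simp
    next
      case (Suc l) then have l: "l < length zs" using ij by simp
      have pl: "\<pi> l \<in> hom C S (zs!l)" using IH(1) l by blast
      have "cmp (\<pi>' j) (\<iota>' i) = cmp (cmp (\<pi> l) p2) (cmp i2 (\<iota> k))" using ik Suc by (simp add: \<iota>'_def \<pi>'_def)
      also have "\<dots> = cmp (\<pi> l) (cmp (cmp p2 i2) (\<iota> k))"
        using comp_assoc[of "\<iota> k" i2 p2] comp_assoc[of "cmp i2 (\<iota> k)" p2 "\<pi> l"] b ik' pl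
        by (simp add: hom_iff)
      also have "\<dots> = cmp (\<pi> l) (\<iota> k)" using b(6) ik' comp_id_left[of "\<iota> k"] by (simp add: hom_iff)
      also have "\<dots> = (if k = l then cid C (zs!k) else zr (zs!k) (zs!l))" using IH(2) k l by blast
      finally show ?thesis using ik Suc by simp
    qed
  qed
  show ?case using h1 h2 by blast
qed

end

context FF begin

lemma H_msum_vec: assumes "\<And>x. x \<in> set xs \<Longrightarrow> f x \<in> hom C X Y" and v: "v \<in> carrier_vec (d X)" and a: "a < d Y"
  shows "(H (msum X Y (map f xs)) *\<^sub>v v) $ a = (\<Sum>x\<leftarrow>xs. (H (f x) *\<^sub>v v) $ a)"
  using assms(1)
proof (induction xs)
  case Nil
  show ?case using v a by (simp add: msum_def)
next
  case (Cons x xs)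
  have fx: "f x \<in> hom C X Y" using Cons by simp
  have r: "msum X Y (map f xs) \<in> hom C X Y" using Cons.prems by (intro msum_hom) auto
  have "msum X Y (map f (x # xs)) = ad (f x) (msum X Y (map f xs))" by (simp add: msum_def)
  hence "H (msum X Y (map f (x # xs))) = H (f x) + H (msum X Y (map f xs))"
    using H_add[OF fx r] by simp
  moreover have "H (f x) \<in> carrier_mat (d Y) (d X)" using H_carrier[of "f x"] fx by (simp add: hom_iff)
  moreover have "H (msum X Y (map f xs)) \<in> carrier_mat (d Y) (d X)" using H_carrier[of "msum X Y (map f xs)"] r by (simp add: hom_iff)
  ultimately have "H (msum X Y (map f (x # xs))) *\<^sub>v v = H (f x) *\<^sub>v v + H (msum X Y (map f xs)) *\<^sub>v v"
    using v add_mult_distrib_mat_vec by metis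
  hence "(H (msum X Y (map f (x # xs))) *\<^sub>v v) $ a = (H (f x) *\<^sub>v v) $ a + (H (msum X Y (map f xs)) *\<^sub>v v) $ a"
    using a fx r by (simp add: hom_iff)
  then show ?case using Cons by simp
qed

lemma H_smul_vec: assumes v: "v \<in> carrier_vec (d (dm f))" and a: "a < d (cd f)"
  shows "(H (csmul C q f) *\<^sub>v v) $ a = of_rat q * (H f *\<^sub>v v) $ a"
  using v a H_carrier[of f] by (simp add: H_smul scalar_prod_def sum_distrib_left mult.assoc)

end


type_synonym ('o) fam = "'o \<Rightarrow> nat \<Rightarrow> nat \<Rightarrow> complex"

lemma Fmat_transpose: "A \<in> Fmat F n m \<Longrightarrow> transpose_mat A \<in> Fmat F m n"
  unfolding Fmat_def by auto

lemma Fvec_add: "subfield_C F \<Longrightarrow> u \<in> Fvec F n \<Longrightarrow> v \<in> Fvec F n \<Longrightarrow> u + v \<in> Fvec F n"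
  unfolding Fvec_def subfield_C_def by auto

lemma zero_mat_mult_vec[simp]: "v \<in> carrier_vec m \<Longrightarrow> 0\<^sub>m n m *\<^sub>v v = (0\<^sub>v n :: 'a::semiring_0 vec)"
  by (auto intro!: eq_vecI simp: scalar_prod_def)
lemma mult_vec_zero[simp]: "A \<in> carrier_mat n m \<Longrightarrow> A *\<^sub>v 0\<^sub>v m = (0\<^sub>v n :: 'a::semiring_0 vec)"
  by (auto intro!: eq_vecI simp: scalar_prod_def)

lemma Kspan_0: "0 \<in> Kspan K S"
  unfolding Kspan_def by (rule CollectI, rule exI[of _ "[]"]) auto

lemma Kspan_add: assumes "x \<in> Kspan K S" "y \<in> Kspan K S" shows "x + y \<in> Kspan K S"
proof -
  obtain L1 where "x = sum_list (map (\<lambda>(c, r). (\<lambda>X i j. c * r X i j)) L1)" "set L1 \<subseteq> K \<times> S"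
    using assms(1) unfolding Kspan_def by blast
  moreover obtain L2 where "y = sum_list (map (\<lambda>(c, r). (\<lambda>X i j. c * r X i j)) L2)" "set L2 \<subseteq> K \<times> S"
    using assms(2) unfolding Kspan_def by blast
  ultimately show ?thesis unfolding Kspan_def
    by (intro CollectI exI[of _ "L1 @ L2"]) auto
qed

lemma sum_list_scale: fixes L :: "(complex \<times> ('o \<Rightarrow> nat \<Rightarrow> nat \<Rightarrow> complex)) list" shows "(\<lambda>X i j. c * sum_list (map (\<lambda>(c, r). (\<lambda>X i j. c * r X i j)) L) X i j) =
   sum_list (map (\<lambda>(c', r). (\<lambda>X i j. c' * r X i j)) (map (\<lambda>(c', r). (c * c', r)) L))"
  by (induction L) (auto simp: fun_eq_iff algebra_simps)

lemma Kspan_scale: assumes "x \<in> Kspan K S" "subfield_C K" "c \<in> K"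
  shows "(\<lambda>X i j. c * x X i j) \<in> Kspan K S"
proof -
  obtain L where L: "x = sum_list (map (\<lambda>(c, r). (\<lambda>X i j. c * r X i j)) L)" "set L \<subseteq> K \<times> S"
    using assms(1) unfolding Kspan_def by blast
  have "set (map (\<lambda>(c', r). (c * c', r)) L) \<subseteq> K \<times> S"
    using L(2) assms(2,3) by (auto intro: subfield_mult)
  thus ?thesis unfolding Kspan_def L(1) sum_list_scale by blast
qed

lemma Kspan_uminus: assumes "x \<in> Kspan K S" "subfield_C K" shows "- x \<in> Kspan K S"
proof -
  have "(\<lambda>X i j. (-1) * x X i j) \<in> Kspan K S"
    using Kspan_scale[OF assms(1,2)] assms(2) subfield_1 subfield_uminus by blast
  moreover have "(\<lambda>X i j. (-1) * x X i j) = - x" by (auto simp: fun_eq_iff)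
  ultimately show ?thesis by simp
qed

lemma Kspan_diff: "x \<in> Kspan K S \<Longrightarrow> y \<in> Kspan K S \<Longrightarrow> subfield_C K \<Longrightarrow> x - y \<in> Kspan K S"
  using Kspan_add[of x K S "- y"] Kspan_uminus[of y K S] by simp

lemma Kspan_gen: "r \<in> S \<Longrightarrow> subfield_C K \<Longrightarrow> r \<in> Kspan K S"
  unfolding Kspan_def
  by (rule CollectI, rule exI[of _ "[(1, r)]"]) (auto simp: subfield_1 fun_eq_iff)

lemma ptensor_add_left: "s1 \<in> carrier_vec (dB M) \<Longrightarrow> s2 \<in> carrier_vec (dB M) \<Longrightarrow>
  ptensor dB dR M (s1 + s2) w = ptensor dB dR M s1 w + ptensor dB dR M s2 w"
  by (auto simp: ptensor_def fun_eq_iff algebra_simps)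
lemma ptensor_add_right: "w1 \<in> carrier_vec (dR M) \<Longrightarrow> w2 \<in> carrier_vec (dR M) \<Longrightarrow>
  ptensor dB dR M s (w1 + w2) = ptensor dB dR M s w1 + ptensor dB dR M s w2"
  by (auto simp: ptensor_def fun_eq_iff algebra_simps)
lemma ptensor_zero_right: "ptensor dB dR M s (0\<^sub>v (dR M)) = 0"
  by (auto simp: ptensor_def fun_eq_iff)
lemma ptensor_zero_left: "ptensor dB dR M (0\<^sub>v (dB M)) w = 0"
  by (auto simp: ptensor_def fun_eq_iff)

locale Setup = QAB C for C :: "('o, 'm) qcat" +
  fixes K :: "complex set" and dB dR :: "'o \<Rightarrow> nat" and HB HdR :: "'m \<Rightarrow> complex mat"
    and I :: "'o \<Rightarrow> complex mat"
  assumes subK: "subfield_C K"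
    and ffB: "fiber_functor C \<rat> dB HB"
    and ffR: "fiber_functor C K dR HdR"
    and comp: "comparison C dB HB dR HdR I"
begin

sublocale B: FF C "\<rat>" dB HB by (unfold_locales) (fact subfield_Rats, fact ffB)
sublocale R: FF C K dR HdR by (unfold_locales) (fact subK, fact ffR)

abbreviation "KS \<equiv> Kspan K (period_relations C K dB HB dR HdR)"
abbreviation "pt \<equiv> ptensor dB dR"

lemma I_carrier: "I M \<in> carrier_mat (dR M) (dB M)"
  using comp unfolding comparison_def by blast
lemma I_inv: "invertible_mat (I M)"
  using comp unfolding comparison_def by blast
lemma I_nat: "I (cd f) * HB f = HdR f * I (dm f)"
  using comp unfolding comparison_def by blast

lemma rel_in: "\<alpha> \<in> hom C M N \<Longrightarrow> \<sigma> \<in> Fvec \<rat> (dB M) \<Longrightarrow> \<omega> \<in> Fvec K (dR N) \<Longrightarrow>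
   pt M \<sigma> (dual_map (HdR \<alpha>) \<omega>) - pt N (HB \<alpha> *\<^sub>v \<sigma>) \<omega> \<in> KS"
  by (rule Kspan_gen[OF _ subK]) (unfold period_relations_def, blast)

lemma dual_Fvec: "\<omega> \<in> Fvec K (dR (cd f)) \<Longrightarrow> dual_map (HdR f) \<omega> \<in> Fvec K (dR (dm f))"
  unfolding dual_map_def by (rule Fmat_mult_vec[OF subK Fmat_transpose[OF R.H_Fmat]])

lemma dual_comp: assumes "cd f = dm g" "\<omega> \<in> carrier_vec (dR (cd g))"
  shows "dual_map (HdR f) (dual_map (HdR g) \<omega>) = dual_map (HdR (cmp g f)) \<omega>"
proof -
  have f: "HdR f \<in> carrier_mat (dR (dm g)) (dR (dm f))" using R.H_carrier[of f] assms by simp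
  have g: "HdR g \<in> carrier_mat (dR (cd g)) (dR (dm g))" using R.H_carrier[of g] by simp
  have "dual_map (HdR (cmp g f)) \<omega> = transpose_mat (HdR g * HdR f) *\<^sub>v \<omega>"
    unfolding dual_map_def R.H_comp[OF assms(1)] ..
  also have "\<dots> = (transpose_mat (HdR f) * transpose_mat (HdR g)) *\<^sub>v \<omega>"
    using transpose_mult[OF g f] by simp
  also have "\<dots> = transpose_mat (HdR f) *\<^sub>v (transpose_mat (HdR g) *\<^sub>v \<omega>)"
    by (rule assoc_mult_mat_vec) (use f g assms in auto)
  finally show ?thesis unfolding dual_map_def by simp
qed

lemma dual_zero: "\<omega> \<in> carrier_vec (dR Y) \<Longrightarrow> dual_map (HdR (zr X Y)) \<omega> = 0\<^sub>v (dR X)"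
  unfolding dual_map_def by (auto intro!: eq_vecI simp: scalar_prod_def)

lemma dual_id: "\<omega> \<in> carrier_vec (dR X) \<Longrightarrow> dual_map (HdR (cid C X)) \<omega> = \<omega>"
  unfolding dual_map_def by simp

lemma pair_lemma: assumes fg: "cd f = dm g" and \<omega>: "\<omega> \<in> carrier_vec (dR (cd g))"
  and \<sigma>: "\<sigma> \<in> carrier_vec (dB (dm f))"
  shows "dual_map (HdR g) \<omega> \<bullet> (I (dm g) *\<^sub>v (HB f *\<^sub>v \<sigma>)) = \<omega> \<bullet> (I (cd g) *\<^sub>v (HB (cmp g f) *\<^sub>v \<sigma>))"
proof -
  have Hg: "HdR g \<in> carrier_mat (dR (cd g)) (dR (dm g))" using R.H_carrier[of g] by simp
  have Bg: "HB g \<in> carrier_mat (dB (cd g)) (dB (dm g))" using B.H_carrier[of g] by simp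
  have Bf: "HB f \<in> carrier_mat (dB (dm g)) (dB (dm f))" using B.H_carrier[of f] fg by simp
  have x: "HB f *\<^sub>v \<sigma> \<in> carrier_vec (dB (dm g))" using Bf \<sigma> by simp
  have y: "I (dm g) *\<^sub>v (HB f *\<^sub>v \<sigma>) \<in> carrier_vec (dR (dm g))" using I_carrier[of "dm g"] x by simp
  have "dual_map (HdR g) \<omega> \<bullet> (I (dm g) *\<^sub>v (HB f *\<^sub>v \<sigma>)) = \<omega> \<bullet> (HdR g *\<^sub>v (I (dm g) *\<^sub>v (HB f *\<^sub>v \<sigma>)))"
    unfolding dual_map_def by (rule transpose_vec_mult_scalar[OF Hg y \<omega>])
  also have "HdR g *\<^sub>v (I (dm g) *\<^sub>v (HB f *\<^sub>v \<sigma>)) = (HdR g * I (dm g)) *\<^sub>v (HB f *\<^sub>v \<sigma>)"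
    using assoc_mult_mat_vec[OF Hg I_carrier[of "dm g"] x] by simp
  also have "\<dots> = (I (cd g) * HB g) *\<^sub>v (HB f *\<^sub>v \<sigma>)" using I_nat[of g] by simp
  also have "\<dots> = I (cd g) *\<^sub>v (HB g *\<^sub>v (HB f *\<^sub>v \<sigma>))"
    using Bg I_carrier[of "cd g"] x by (simp add: assoc_mult_mat_vec)
  also have "HB g *\<^sub>v (HB f *\<^sub>v \<sigma>) = HB (cmp g f) *\<^sub>v \<sigma>"
    using B.H_mult_vec_comp[OF fg \<sigma>] by simp
  finally show ?thesis .
qed


lemma reduce:
  assumes "\<forall>(M,\<sigma>,\<omega>)\<in>set L. \<sigma> \<in> Fvec \<rat> (dB M) \<and> \<omega> \<in> Fvec K (dR M)"
  shows "\<exists>X \<sigma> \<omega>. \<sigma> \<in> Fvec \<rat> (dB X) \<and> \<omega> \<in> Fvec K (dR X) \<and>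
     sum_list (map (\<lambda>(M,\<sigma>,\<omega>). pt M \<sigma> \<omega>) L) - pt X \<sigma> \<omega> \<in> KS \<and>
     sum_list (map (\<lambda>(M,\<sigma>,\<omega>). period I M \<sigma> \<omega>) L) = period I X \<sigma> \<omega>"
  using assms
proof (induction L)
  case Nil
  let ?X = "undefined :: 'o"
  have z: "(\<lambda>(X::'o) (i::nat) (j::nat). 0::complex) \<in> KS"
    using Kspan_0[of K "period_relations C K dB HB dR HdR"] by (simp add: zero_fun_def)
  show ?case
    apply (rule exI[of _ ?X], rule exI[of _ "0\<^sub>v (dB ?X)"], rule exI[of _ "0\<^sub>v (dR ?X)"])
    using zero_Fvec[OF subfield_Rats] zero_Fvec[OF subK] Kspan_0 ptensor_zero_left[of dB dR]
      I_carrier[of ?X] z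
    unfolding period_def by simp
next
  case (Cons a L)
  obtain M \<sigma>1 \<omega>1 where a: "a = (M,\<sigma>1,\<omega>1)" by (cases a)
  have h1: "\<sigma>1 \<in> Fvec \<rat> (dB M)" "\<omega>1 \<in> Fvec K (dR M)" using Cons.prems a by auto
  obtain X \<sigma>2 \<omega>2 where IH: "\<sigma>2 \<in> Fvec \<rat> (dB X)" "\<omega>2 \<in> Fvec K (dR X)"
     "sum_list (map (\<lambda>(M,\<sigma>,\<omega>). pt M \<sigma> \<omega>) L) - pt X \<sigma>2 \<omega>2 \<in> KS"
     "sum_list (map (\<lambda>(M,\<sigma>,\<omega>). period I M \<sigma> \<omega>) L) = period I X \<sigma>2 \<omega>2"
  proof -
    have "\<forall>(M,\<sigma>,\<omega>)\<in>set L. \<sigma> \<in> Fvec \<rat> (dB M) \<and> \<omega> \<in> Fvec K (dR M)" using Cons.prems by simp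
    from Cons.IH[OF this] show ?thesis using that by blast
  qed
  obtain S i1 i2 p1 p2 where b: "i1 \<in> hom C M S" "i2 \<in> hom C X S" "p1 \<in> hom C S M" "p2 \<in> hom C S X"
        "cmp p1 i1 = cid C M" "cmp p2 i2 = cid C X"
        "cmp p1 i2 = zr X M" "cmp p2 i1 = zr M X"
    using biprod2[of M X] by blast
  have hd: "dm i1 = M" "cd i1 = S" "dm i2 = X" "cd i2 = S" "dm p1 = S" "cd p1 = M" "dm p2 = S" "cd p2 = X"
    using b by (auto simp: hom_iff)
  define a1 where "a1 = HB i1 *\<^sub>v \<sigma>1"
  define a2 where "a2 = HB i2 *\<^sub>v \<sigma>2"
  define w1 where "w1 = dual_map (HdR p1) \<omega>1"
  define w2 where "w2 = dual_map (HdR p2) \<omega>2"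
  have a1: "a1 \<in> Fvec \<rat> (dB S)" using B.H_vec[of \<sigma>1 i1] h1 hd unfolding a1_def by simp
  have a2: "a2 \<in> Fvec \<rat> (dB S)" using B.H_vec[of \<sigma>2 i2] IH hd unfolding a2_def by simp
  have w1: "w1 \<in> Fvec K (dR S)" using dual_Fvec[of \<omega>1 p1] h1 hd unfolding w1_def by simp
  have w2: "w2 \<in> Fvec K (dR S)" using dual_Fvec[of \<omega>2 p2] IH hd unfolding w2_def by simp
  note c = Fvec_carrier[OF a1] Fvec_carrier[OF a2] Fvec_carrier[OF w1] Fvec_carrier[OF w2]
    Fvec_carrier[OF h1(1)] Fvec_carrier[OF h1(2)] Fvec_carrier[OF IH(1)] Fvec_carrier[OF IH(2)]
  define \<sigma> where "\<sigma> = a1 + a2"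
  define \<omega> where "\<omega> = w1 + w2"
  have \<sigma>: "\<sigma> \<in> Fvec \<rat> (dB S)" unfolding \<sigma>_def by (rule Fvec_add[OF subfield_Rats a1 a2])
  have \<omega>: "\<omega> \<in> Fvec K (dR S)" unfolding \<omega>_def by (rule Fvec_add[OF subK w1 w2])
  have pS: "pt S \<sigma> \<omega> = pt S a1 w1 + pt S a1 w2 + pt S a2 w1 + pt S a2 w2"
    unfolding \<sigma>_def \<omega>_def using c by (simp add: ptensor_add_left ptensor_add_right)
  have d11: "dual_map (HdR i1) w1 = \<omega>1"
    unfolding w1_def using dual_comp[of i1 p1 \<omega>1] hd c b(5) dual_id by simp
  have d12: "dual_map (HdR i1) w2 = 0\<^sub>v (dR M)"
    unfolding w2_def using dual_comp[of i1 p2 \<omega>2] hd c b(8) dual_zero by simp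
  have d21: "dual_map (HdR i2) w1 = 0\<^sub>v (dR X)"
    unfolding w1_def using dual_comp[of i2 p1 \<omega>1] hd c b(7) dual_zero by simp
  have d22: "dual_map (HdR i2) w2 = \<omega>2"
    unfolding w2_def using dual_comp[of i2 p2 \<omega>2] hd c b(6) dual_id by simp
  have r11: "pt M \<sigma>1 \<omega>1 - pt S a1 w1 \<in> KS" using rel_in[OF b(1) h1(1) w1] d11 a1_def by simp
  have r12: "0 - pt S a1 w2 \<in> KS" using rel_in[OF b(1) h1(1) w2] d12 a1_def ptensor_zero_right[of dB dR] by simp
  have r21: "0 - pt S a2 w1 \<in> KS" using rel_in[OF b(2) IH(1) w1] d21 a2_def ptensor_zero_right[of dB dR] by simp
  have r22: "pt X \<sigma>2 \<omega>2 - pt S a2 w2 \<in> KS" using rel_in[OF b(2) IH(1) w2] d22 a2_def by simp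
  have eq: "(pt M \<sigma>1 \<omega>1 + sum_list (map (\<lambda>(M,\<sigma>,\<omega>). pt M \<sigma> \<omega>) L)) - pt S \<sigma> \<omega> =
     (pt M \<sigma>1 \<omega>1 - pt S a1 w1) + (0 - pt S a1 w2) + (0 - pt S a2 w1) + (pt X \<sigma>2 \<omega>2 - pt S a2 w2)
     + (sum_list (map (\<lambda>(M,\<sigma>,\<omega>). pt M \<sigma> \<omega>) L) - pt X \<sigma>2 \<omega>2)"
    unfolding pS by (simp add: algebra_simps)
  have KS: "(pt M \<sigma>1 \<omega>1 + sum_list (map (\<lambda>(M,\<sigma>,\<omega>). pt M \<sigma> \<omega>) L)) - pt S \<sigma> \<omega> \<in> KS"
    unfolding eq by (intro Kspan_add r11 r12 r21 r22 IH(3))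
  have IS: "I S \<in> carrier_mat (dR S) (dB S)" by (rule I_carrier)
  have pp: "period I S \<sigma> \<omega> = w1 \<bullet> (I S *\<^sub>v a1) + w1 \<bullet> (I S *\<^sub>v a2) + w2 \<bullet> (I S *\<^sub>v a1) + w2 \<bullet> (I S *\<^sub>v a2)"
  proof -
    have "I S *\<^sub>v \<sigma> = I S *\<^sub>v a1 + I S *\<^sub>v a2" unfolding \<sigma>_def using c IS by (simp add: mult_add_distrib_mat_vec)
    moreover have "I S *\<^sub>v a1 \<in> carrier_vec (dR S)" "I S *\<^sub>v a2 \<in> carrier_vec (dR S)" using IS c by auto
    ultimately show ?thesis unfolding period_def \<omega>_def using c
      by (simp add: add_scalar_prod_distrib[of _ "dR S"] scalar_prod_add_distrib[of _ "dR S"])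
  qed
  have q11: "w1 \<bullet> (I S *\<^sub>v a1) = period I M \<sigma>1 \<omega>1"
    unfolding w1_def a1_def period_def using pair_lemma[of i1 p1 \<omega>1 \<sigma>1] hd c b(5) by simp
  have q12: "w2 \<bullet> (I S *\<^sub>v a1) = 0"
    unfolding w2_def a1_def using pair_lemma[of i1 p2 \<omega>2 \<sigma>1] hd c b(8) I_carrier[of X] by simp
  have q21: "w1 \<bullet> (I S *\<^sub>v a2) = 0"
    unfolding w1_def a2_def using pair_lemma[of i2 p1 \<omega>1 \<sigma>2] hd c b(7) I_carrier[of M] by simp
  have q22: "w2 \<bullet> (I S *\<^sub>v a2) = period I X \<sigma>2 \<omega>2"
    unfolding w2_def a2_def period_def using pair_lemma[of i2 p2 \<omega>2 \<sigma>2] hd c b(6) by simp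
  have s1: "sum_list (map (\<lambda>(M,\<sigma>,\<omega>). pt M \<sigma> \<omega>) (a # L)) = pt M \<sigma>1 \<omega>1 + sum_list (map (\<lambda>(M,\<sigma>,\<omega>). pt M \<sigma> \<omega>) L)"
    using a by simp
  have s2: "sum_list (map (\<lambda>(M,\<sigma>,\<omega>). period I M \<sigma> \<omega>) (a # L)) = period I S \<sigma> \<omega>"
    using a pp q11 q12 q21 q22 IH(4) by simp
  show ?case unfolding s1 s2 using \<sigma> \<omega> KS by blast
qed

lemma B_imp_A:
  assumes B: "\<forall>M \<sigma> \<omega>. \<sigma> \<in> Fvec \<rat> (dB M) \<longrightarrow> \<omega> \<in> Fvec K (dR M) \<longrightarrow> period I M \<sigma> \<omega> = 0 \<longrightarrow>
       (\<exists>N' N s p. s \<in> hom C N' M \<and> p \<in> hom C M N \<and> short_exact C s p \<and>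
          (\<exists>\<tau>\<in>Fvec \<rat> (dB N'). \<sigma> = HB s *\<^sub>v \<tau>) \<and>
          (\<exists>\<eta>\<in>Fvec K (dR N). \<omega> = dual_map (HdR p) \<eta>))"
  shows "period_conjecture C K dB HB dR HdR I"
  unfolding period_conjecture_def
proof (intro allI impI)
  fix L :: "('o \<times> complex vec \<times> complex vec) list"
  assume L: "\<forall>(M,\<sigma>,\<omega>)\<in>set L. \<sigma> \<in> Fvec \<rat> (dB M) \<and> \<omega> \<in> Fvec K (dR M)"
    and z: "sum_list (map (\<lambda>(M,\<sigma>,\<omega>). period I M \<sigma> \<omega>) L) = 0"
  obtain X \<sigma> \<omega> where r: "\<sigma> \<in> Fvec \<rat> (dB X)" "\<omega> \<in> Fvec K (dR X)"
     "sum_list (map (\<lambda>(M,\<sigma>,\<omega>). pt M \<sigma> \<omega>) L) - pt X \<sigma> \<omega> \<in> KS"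
     "sum_list (map (\<lambda>(M,\<sigma>,\<omega>). period I M \<sigma> \<omega>) L) = period I X \<sigma> \<omega>"
    using reduce[OF L] by blast
  obtain N' N s p \<tau> \<eta> where e: "s \<in> hom C N' X" "p \<in> hom C X N" "short_exact C s p"
     "\<tau> \<in> Fvec \<rat> (dB N')" "\<sigma> = HB s *\<^sub>v \<tau>" "\<eta> \<in> Fvec K (dR N)" "\<omega> = dual_map (HdR p) \<eta>"
    using B r z by metis
  have hd: "dm s = N'" "cd s = X" "dm p = X" "cd p = N" using e by (auto simp: hom_iff)
  have ps: "cmp p s = zr N' N" using kernelD(2)[of s p] e(3) hd unfolding short_exact_def by simp
  have w: "dual_map (HdR p) \<eta> \<in> Fvec K (dR X)" using dual_Fvec[of \<eta> p] e hd by simp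
  have "dual_map (HdR s) (dual_map (HdR p) \<eta>) = 0\<^sub>v (dR N')"
    using dual_comp[of s p \<eta>] hd ps dual_zero Fvec_carrier[OF e(6)] by simp
  hence "0 - pt X \<sigma> \<omega> \<in> KS" using rel_in[OF e(1) e(4) w] e(5,7) ptensor_zero_right[of dB dR] by simp
  hence "(sum_list (map (\<lambda>(M,\<sigma>,\<omega>). pt M \<sigma> \<omega>) L) - pt X \<sigma> \<omega>) - (0 - pt X \<sigma> \<omega>) \<in> KS"
    using Kspan_diff[OF r(3) _ subK] by blast
  thus "sum_list (map (\<lambda>(M,\<sigma>,\<omega>). pt M \<sigma> \<omega>) L) \<in> KS" by simp
qed

end


lemma inv_mat_carrier: assumes "A \<in> carrier_mat n n" "invertible_mat A"
  obtains B where "B \<in> carrier_mat n n" "A * B = 1\<^sub>m n"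
proof -
  obtain B where B: "inverts_mat A B" "inverts_mat B A" using assms(2) unfolding invertible_mat_def by blast
  have AB: "A * B = 1\<^sub>m n" using B(1) assms(1) unfolding inverts_mat_def by simp
  have "dim_col (A * B) = n" using AB by simp
  hence c: "dim_col B = n" by simp
  have "B * A = 1\<^sub>m (dim_row B)" using B(2) unfolding inverts_mat_def by simp
  hence "dim_col (B * A) = dim_row B" by simp
  hence "dim_row B = n" using assms(1) by simp
  thus ?thesis using that c AB by blast
qed

context Setup begin

lemma final_step:
  assumes s: "s \<in> hom C N' M" and p: "p \<in> hom C M N" and ses: "short_exact C s p"
    and \<omega>: "\<omega> \<in> Fvec K (dR M)"
    and orth: "\<forall>u\<in>Fvec \<rat> (dB N'). \<omega> \<bullet> (I M *\<^sub>v (HB s *\<^sub>v u)) = 0"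
  shows "\<exists>\<eta>\<in>Fvec K (dR N). \<omega> = dual_map (HdR p) \<eta>"
proof -
  have hd: "dm s = N'" "cd s = M" "dm p = M" "cd p = N" using s p by (auto simp: hom_iff)
  have \<omega>c: "\<omega> \<in> carrier_vec (dR M)" using Fvec_carrier[OF \<omega>] .
  define A where "A = I M * HB s"
  have Bs: "HB s \<in> carrier_mat (dB M) (dB N')" using B.H_carrier[of s] hd by simp
  have Rs: "HdR s \<in> carrier_mat (dR M) (dR N')" using R.H_carrier[of s] hd by simp
  have A: "A \<in> carrier_mat (dR M) (dB N')" unfolding A_def using I_carrier[of M] Bs by simp
  define \<rho> where "\<rho> = transpose_mat A *\<^sub>v \<omega>"
  have \<rho>c: "\<rho> \<in> carrier_vec (dB N')" unfolding \<rho>_def by (rule mult_mat_vec_carrier[OF _ \<omega>c]) (use A in simp)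
  have \<rho>0: "\<rho> = 0\<^sub>v (dB N')"
  proof (rule eq_vecI)
    fix k assume k: "k < dim_vec (0\<^sub>v (dB N') :: complex vec)"
    hence k': "k < dB N'" by simp
    have u: "unit_vec (dB N') k \<in> Fvec \<rat> (dB N')" using unit_Fvec[OF subfield_Rats k'] .
    have "\<rho> $ k = \<rho> \<bullet> unit_vec (dB N') k" using \<rho>c k' by simp
    also have "\<dots> = \<omega> \<bullet> (A *\<^sub>v unit_vec (dB N') k)"
      unfolding \<rho>_def by (rule transpose_vec_mult_scalar[OF A _ \<omega>c]) (use k' in simp)
    also have "A *\<^sub>v unit_vec (dB N') k = I M *\<^sub>v (HB s *\<^sub>v unit_vec (dB N') k)"
      unfolding A_def using I_carrier[of M] Bs k' by (simp add: assoc_mult_mat_vec)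
    finally show "\<rho> $ k = 0\<^sub>v (dB N') $ k" using orth u k' by simp
  qed (use \<rho>c in simp)
  have Az: "\<omega> \<bullet> (A *\<^sub>v z) = 0" if z: "z \<in> carrier_vec (dB N')" for z
  proof -
    have "\<omega> \<bullet> (A *\<^sub>v z) = \<rho> \<bullet> z" unfolding \<rho>_def by (rule transpose_vec_mult_scalar[OF A z \<omega>c, symmetric])
    thus ?thesis using \<rho>0 z by simp
  qed
  obtain Binv where Binv: "Binv \<in> carrier_mat (dR N') (dR N')" "I N' * Binv = 1\<^sub>m (dR N')"
  proof -
    have "I N' \<in> carrier_mat (dR N') (dR N')" using I_carrier[of N'] I_inv[of N']
      unfolding invertible_mat_def square_mat.simps by auto
    thus ?thesis using inv_mat_carrier I_inv that by blast
  qed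
  have dBdR: "dB N' = dR N'" using I_carrier[of N'] I_inv[of N'] unfolding invertible_mat_def square_mat.simps by auto
  have w0: "\<omega> \<bullet> (HdR s *\<^sub>v w) = 0" if w: "w \<in> carrier_vec (dR N')" for w
  proof -
    define z where "z = Binv *\<^sub>v w"
    have zc: "z \<in> carrier_vec (dB N')" unfolding z_def using Binv w dBdR by simp
    have IN: "I N' \<in> carrier_mat (dR N') (dR N')" using I_carrier[of N'] dBdR by simp
    have "I N' *\<^sub>v z = (I N' * Binv) *\<^sub>v w" unfolding z_def using assoc_mult_mat_vec[OF IN Binv(1) w] by simp
    hence "I N' *\<^sub>v z = w" using Binv(2) w by simp
    hence "HdR s *\<^sub>v w = (HdR s * I N') *\<^sub>v z" using Rs I_carrier[of N'] zc by (simp add: assoc_mult_mat_vec)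
    also have "HdR s * I N' = A" unfolding A_def using I_nat[of s] hd by simp
    finally show ?thesis using Az[OF zc] by simp
  qed
  have ker0: "\<omega> \<bullet> x = 0" if x: "x \<in> Fvec K (dR M)" "HdR p *\<^sub>v x = 0\<^sub>v (dR N)" for x
  proof -
    obtain w where "w \<in> Fvec K (dR N')" "HdR s *\<^sub>v w = x"
      using R.ses_exact[OF ses, of x] x hd by auto
    thus ?thesis using w0 Fvec_carrier by blast
  qed
  define P where "P = HdR p"
  have P: "P \<in> carrier_mat (dR N) (dR M)" unfolding P_def using R.H_carrier[of p] hd by simp
  have ex: "\<exists>v. v \<in> Fvec K (dR M) \<and> P *\<^sub>v v = unit_vec (dR N) l" if l: "l < dR N" for l
    using R.ses_surj[OF ses, of "unit_vec (dR N) l"] unit_Fvec[OF subK l] hd unfolding P_def by auto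
  define vv where "vv l = (SOME v. v \<in> Fvec K (dR M) \<and> P *\<^sub>v v = unit_vec (dR N) l)" for l
  have vv: "vv l \<in> Fvec K (dR M)" "P *\<^sub>v vv l = unit_vec (dR N) l" if "l < dR N" for l
    using someI_ex[OF ex[OF that]] unfolding vv_def by auto
  define Rm where "Rm = mat (dR M) (dR N) (\<lambda>(i,l). vv l $ i)"
  have Rm: "Rm \<in> Fmat K (dR M) (dR N)" unfolding Rm_def Fmat_def using vv(1) unfolding Fvec_def by auto
  have Rmc: "Rm \<in> carrier_mat (dR M) (dR N)" using Fmat_carrier[OF Rm] .
  have PR: "P * Rm = 1\<^sub>m (dR N)"
  proof (rule eq_matI)
    fix a l assume al: "a < dim_row (1\<^sub>m (dR N) :: complex mat)" "l < dim_col (1\<^sub>m (dR N) :: complex mat)"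
    have "col Rm l = vv l" using al vv(1)[of l] unfolding Rm_def Fvec_def by (auto intro!: eq_vecI)
    hence "(P * Rm) $$ (a,l) = (P *\<^sub>v vv l) $ a" using al P Rmc by simp
    also have "\<dots> = 1\<^sub>m (dR N) $$ (a,l)" using vv(2)[of l] al by simp
    finally show "(P * Rm) $$ (a,l) = 1\<^sub>m (dR N) $$ (a,l)" .
  qed (use P Rmc in auto)
  define \<eta> where "\<eta> = transpose_mat Rm *\<^sub>v \<omega>"
  have \<eta>: "\<eta> \<in> Fvec K (dR N)" unfolding \<eta>_def by (rule Fmat_mult_vec[OF subK Fmat_transpose[OF Rm] \<omega>])
  have \<eta>c: "\<eta> \<in> carrier_vec (dR N)" using Fvec_carrier[OF \<eta>] .
  have "\<omega> = dual_map (HdR p) \<eta>"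
  proof (rule eq_vecI)
    fix j assume j: "j < dim_vec (dual_map (HdR p) \<eta>)"
    hence j': "j < dR M" unfolding dual_map_def using P P_def hd by simp
    define e where "e = (unit_vec (dR M) j :: complex vec)"
    have e: "e \<in> Fvec K (dR M)" unfolding e_def using unit_Fvec[OF subK j'] .
    have ec: "e \<in> carrier_vec (dR M)" using Fvec_carrier[OF e] .
    have Pe: "P *\<^sub>v e \<in> Fvec K (dR N)" unfolding P_def using R.H_vec[of e p] e hd by simp
    have RPe: "Rm *\<^sub>v (P *\<^sub>v e) \<in> Fvec K (dR M)" using Fmat_mult_vec[OF subK Rm Pe] .
    define x where "x = e - Rm *\<^sub>v (P *\<^sub>v e)"
    have x: "x \<in> Fvec K (dR M)"
    proof -
      have xc: "x \<in> carrier_vec (dR M)" unfolding x_def using ec Fvec_carrier[OF RPe] by simp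
      have "x $ i \<in> K" if i: "i < dR M" for i
      proof -
        have xeq: "x $ i = e $ i + - ((Rm *\<^sub>v (P *\<^sub>v e)) $ i)" unfolding x_def using index_minus_vec(1)[of i "Rm *\<^sub>v (P *\<^sub>v e)" e] i Rmc by simp
        have k1: "e $ i \<in> K" and k2: "(Rm *\<^sub>v (P *\<^sub>v e)) $ i \<in> K" using e RPe i unfolding Fvec_def by auto
        show ?thesis unfolding xeq by (rule subfield_add[OF subK k1 subfield_uminus[OF subK k2]])
      qed
      thus ?thesis using xc unfolding Fvec_def by auto
    qed
    have "P *\<^sub>v x = P *\<^sub>v e - P *\<^sub>v (Rm *\<^sub>v (P *\<^sub>v e))"
      unfolding x_def using P ec Fvec_carrier[OF RPe] by (simp add: mult_minus_distrib_mat_vec)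
    also have "P *\<^sub>v (Rm *\<^sub>v (P *\<^sub>v e)) = (P * Rm) *\<^sub>v (P *\<^sub>v e)"
      using P Rmc ec by (simp add: assoc_mult_mat_vec)
    also have "\<dots> = P *\<^sub>v e" unfolding PR using P ec by simp
    finally have "P *\<^sub>v x = 0\<^sub>v (dR N)" using P ec by simp
    hence ox: "\<omega> \<bullet> x = 0" using ker0[OF x] unfolding P_def by simp
    have "\<omega> \<bullet> x = \<omega> \<bullet> e - \<omega> \<bullet> (Rm *\<^sub>v (P *\<^sub>v e))"
      unfolding x_def using \<omega>c ec Fvec_carrier[OF RPe] by (simp add: scalar_prod_minus_distrib)
    hence o1: "\<omega> \<bullet> e = \<omega> \<bullet> (Rm *\<^sub>v (P *\<^sub>v e))" using ox by simp
    have "dual_map (HdR p) \<eta> $ j = dual_map (HdR p) \<eta> \<bullet> e"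
      unfolding e_def dual_map_def using P P_def j' hd by simp
    also have "\<dots> = \<eta> \<bullet> (P *\<^sub>v e)" unfolding dual_map_def P_def[symmetric]
      by (rule transpose_vec_mult_scalar[OF P ec \<eta>c])
    also have "\<dots> = \<omega> \<bullet> (Rm *\<^sub>v (P *\<^sub>v e))" unfolding \<eta>_def
      by (rule transpose_vec_mult_scalar[OF Rmc Fvec_carrier[OF Pe] \<omega>c])
    also have "\<dots> = \<omega> \<bullet> e" using o1 by simp
    also have "\<dots> = \<omega> $ j" unfolding e_def using \<omega>c j' by simp
    finally show "\<omega> $ j = dual_map (HdR p) \<eta> $ j" by simp
  qed (use \<omega>c P P_def hd in \<open>simp add: dual_map_def\<close>)
  thus ?thesis using \<eta> by blast
qed

end


context Setup begin

abbreviation relf :: "'o \<Rightarrow> 'o \<Rightarrow> 'm \<Rightarrow> complex vec \<Rightarrow> complex vec \<Rightarrow> 'o \<Rightarrow> nat \<Rightarrow> nat \<Rightarrow> complex" where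
  "relf M N \<alpha> \<tau> \<eta> \<equiv> pt M \<tau> (dual_map (HdR \<alpha>) \<eta>) - pt N (HB \<alpha> *\<^sub>v \<tau>) \<eta>"

definition rsum :: "(complex \<times> 'o \<times> 'o \<times> 'm \<times> complex vec \<times> complex vec) list \<Rightarrow> 'o \<Rightarrow> nat \<Rightarrow> nat \<Rightarrow> complex" where
  "rsum R = sum_list (map (\<lambda>(c,M,N,\<alpha>,\<tau>,\<eta>). (\<lambda>X i j. c * relf M N \<alpha> \<tau> \<eta> X i j)) R)"

definition good :: "(complex \<times> 'o \<times> 'o \<times> 'm \<times> complex vec \<times> complex vec) list \<Rightarrow> bool" where
  "good R \<longleftrightarrow> (\<forall>(c,M,N,\<alpha>,\<tau>,\<eta>)\<in>set R. c \<in> K \<and> \<alpha> \<in> hom C M N \<and> \<tau> \<in> Fvec \<rat> (dB M) \<and> \<eta> \<in> Fvec K (dR N))"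

lemma Kspan_list_aux: "set L \<subseteq> K \<times> period_relations C K dB HB dR HdR \<Longrightarrow>
   \<exists>R. good R \<and> sum_list (map (\<lambda>(c, r). (\<lambda>X i j. c * r X i j)) L) = rsum R"
proof (induction L)
  case Nil then show ?case by (intro exI[of _ "[]"]) (simp add: good_def rsum_def)
next
  case (Cons a L)
  obtain c r where a: "a = (c, r)" by (cases a)
  have c: "c \<in> K" and r: "r \<in> period_relations C K dB HB dR HdR" using Cons.prems a by auto
  obtain M N \<alpha> \<tau> \<eta> where rr: "r = relf M N \<alpha> \<tau> \<eta>" "\<alpha> \<in> hom C M N" "\<tau> \<in> Fvec \<rat> (dB M)" "\<eta> \<in> Fvec K (dR N)"
    using r unfolding period_relations_def by blast
  obtain R where R: "good R" "sum_list (map (\<lambda>(c, r). (\<lambda>X i j. c * r X i j)) L) = rsum R"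
    using Cons.IH Cons.prems by auto
  show ?case
    apply (rule exI[of _ "(c,M,N,\<alpha>,\<tau>,\<eta>) # R"])
    using R c rr a unfolding good_def rsum_def by simp
qed

lemma Kspan_list: "x \<in> KS \<Longrightarrow> \<exists>R. good R \<and> x = rsum R"
  using Kspan_list_aux unfolding Kspan_def by blast

definition Phi :: "'o list \<Rightarrow> ('o \<Rightarrow> complex mat) \<Rightarrow> ('o \<Rightarrow> nat \<Rightarrow> nat \<Rightarrow> complex) \<Rightarrow> complex" where
  "Phi zs u F = (\<Sum>Z\<in>set zs. \<Sum>a<dB Z. \<Sum>b<dR Z. F Z a b * u Z $$ (b,a))"

lemma Phi_add: "Phi zs u (F + G) = Phi zs u F + Phi zs u G"
  unfolding Phi_def by (simp add: distrib_right sum.distrib)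
lemma Phi_diff: "Phi zs u (F - G) = Phi zs u F - Phi zs u G"
  unfolding Phi_def by (simp add: left_diff_distrib sum_subtractf)
lemma Phi_scale: "Phi zs u (\<lambda>X i j. c * F X i j) = c * Phi zs u F"
  unfolding Phi_def by (simp add: sum_distrib_left mult.assoc)
lemma Phi_zero: "Phi zs u 0 = 0"
  by (simp add: Phi_def)

lemma Phi_rsum: "Phi zs u (rsum R) = (\<Sum>(c,M,N,\<alpha>,\<tau>,\<eta>)\<leftarrow>R. c * Phi zs u (relf M N \<alpha> \<tau> \<eta>))"
proof (induction R)
  case Nil then show ?case by (simp add: rsum_def Phi_def)
next
  case (Cons a R)
  obtain c M N \<alpha> \<tau> \<eta> where a: "a = (c,M,N,\<alpha>,\<tau>,\<eta>)" by (cases a)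
  have e: "rsum (a # R) = (\<lambda>X i j. c * relf M N \<alpha> \<tau> \<eta> X i j) + rsum R" using a by (simp add: rsum_def)
  have "Phi zs u (rsum (a # R)) = c * Phi zs u (relf M N \<alpha> \<tau> \<eta>) + Phi zs u (rsum R)"
    unfolding e Phi_add Phi_scale ..
  thus ?case unfolding Cons.IH a by (simp only: list.map sum_list.Cons prod.case)
qed

lemma Phi_pt: assumes Z: "Z \<in> set zs" and \<tau>: "\<tau> \<in> carrier_vec (dB Z)" and \<eta>: "\<eta> \<in> carrier_vec (dR Z)"
  and u: "u Z \<in> carrier_mat (dR Z) (dB Z)"
  shows "Phi zs u (pt Z \<tau> \<eta>) = \<eta> \<bullet> (u Z *\<^sub>v \<tau>)"
proof -
  define T where "T = (\<Sum>a<dB Z. \<Sum>b<dR Z. \<tau> $ a * \<eta> $ b * u Z $$ (b,a))"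
  have "Phi zs u (pt Z \<tau> \<eta>) = (\<Sum>Z'\<in>set zs. if Z' = Z then T else 0)"
    unfolding Phi_def T_def by (rule sum.cong) (auto simp: ptensor_def)
  also have "\<dots> = T" using Z by simp
  also have "T = (\<Sum>b<dR Z. \<Sum>a<dB Z. \<tau> $ a * \<eta> $ b * u Z $$ (b,a))" unfolding T_def by (rule sum.swap)
  also have "\<dots> = (\<Sum>b<dR Z. \<eta> $ b * (\<Sum>a<dB Z. u Z $$ (b,a) * \<tau> $ a))"
    by (simp add: sum_distrib_left ac_simps)
  also have "\<dots> = (\<Sum>b<dR Z. \<eta> $ b * (u Z *\<^sub>v \<tau>) $ b)"
    by (rule sum.cong) (use mv_entry[OF u \<tau>] in auto)
  also have "\<dots> = \<eta> \<bullet> (u Z *\<^sub>v \<tau>)"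
    unfolding scalar_prod_def using u by (simp add: atLeast0LessThan)
  finally show ?thesis .
qed

lemma Phi_rel:
  assumes M: "M \<in> set zs" and N: "N \<in> set zs" and \<alpha>: "\<alpha> \<in> hom C M N"
    and \<tau>: "\<tau> \<in> carrier_vec (dB M)" and \<eta>: "\<eta> \<in> carrier_vec (dR N)"
    and uM: "u M \<in> carrier_mat (dR M) (dB M)" and uN: "u N \<in> carrier_mat (dR N) (dB N)"
    and nat: "HdR \<alpha> *\<^sub>v (u M *\<^sub>v \<tau>) = u N *\<^sub>v (HB \<alpha> *\<^sub>v \<tau>)"
  shows "Phi zs u (relf M N \<alpha> \<tau> \<eta>) = 0"
proof -
  have hd: "dm \<alpha> = M" "cd \<alpha> = N" using \<alpha> by (auto simp: hom_iff)
  have Ra: "HdR \<alpha> \<in> carrier_mat (dR N) (dR M)" using R.H_carrier[of \<alpha>] hd by simp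
  have Ba: "HB \<alpha> \<in> carrier_mat (dB N) (dB M)" using B.H_carrier[of \<alpha>] hd by simp
  have d: "dual_map (HdR \<alpha>) \<eta> \<in> carrier_vec (dR M)" unfolding dual_map_def using Ra \<eta> by simp
  have "Phi zs u (pt M \<tau> (dual_map (HdR \<alpha>) \<eta>)) = dual_map (HdR \<alpha>) \<eta> \<bullet> (u M *\<^sub>v \<tau>)"
    by (rule Phi_pt[where u=u, OF M \<tau> d uM])
  also have "\<dots> = \<eta> \<bullet> (HdR \<alpha> *\<^sub>v (u M *\<^sub>v \<tau>))"
    unfolding dual_map_def by (rule transpose_vec_mult_scalar[OF Ra _ \<eta>]) (use uM \<tau> in simp)
  also have "\<dots> = \<eta> \<bullet> (u N *\<^sub>v (HB \<alpha> *\<^sub>v \<tau>))" using nat by simp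
  also have "\<dots> = Phi zs u (pt N (HB \<alpha> *\<^sub>v \<tau>) \<eta>)"
    by (rule Phi_pt[where u=u, OF N _ \<eta> uN, symmetric]) (use Ba \<tau> in simp)
  finally show ?thesis by (simp add: Phi_diff)
qed

end


definition rat_of :: "complex \<Rightarrow> rat" where "rat_of c = (SOME q. of_rat q = c)"
lemma sum_list_zeros: "(\<And>x. x \<in> set xs \<Longrightarrow> f x = (0::'a::monoid_add)) \<Longrightarrow> sum_list (map f xs) = 0"
  by (induction xs) auto

lemma rat_of: "c \<in> \<rat> \<Longrightarrow> of_rat (rat_of c) = c"
  unfolding rat_of_def by (rule someI_ex) (auto elim: Rats_cases)

lemma sum_list_upt_sum: "sum_list (map f [0..<n]) = (\<Sum>i<n. f i)"
  by (simp add: sum_set_upt_conv_sum_list_nat[symmetric] atLeast0LessThan)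

context Setup begin

lemma G_lemma:
  assumes "\<forall>f\<in>set fs. dm f = Y" "\<beta> \<in> Fvec \<rat> (dB Y)" "\<forall>f\<in>set fs. HB f *\<^sub>v \<beta> = 0\<^sub>v (dB (cd f))"
  shows "\<exists>G k z0. k \<in> hom C G Y \<and> z0 \<in> Fvec \<rat> (dB G) \<and> HB k *\<^sub>v z0 = \<beta> \<and>
     (\<forall>f\<in>set fs. \<forall>z\<in>Fvec \<rat> (dB G). HB f *\<^sub>v (HB k *\<^sub>v z) = 0\<^sub>v (dB (cd f)))"
  using assms(1,3)
proof (induction fs)
  case Nil
  show ?case
    apply (rule exI[of _ Y], rule exI[of _ "cid C Y"], rule exI[of _ \<beta>])
    using assms(2) id_hom[of Y] Fvec_carrier[OF assms(2)] by simp
next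
  case (Cons f fs)
  then obtain G k z0 where IH: "k \<in> hom C G Y" "z0 \<in> Fvec \<rat> (dB G)" "HB k *\<^sub>v z0 = \<beta>"
     "\<forall>f\<in>set fs. \<forall>z\<in>Fvec \<rat> (dB G). HB f *\<^sub>v (HB k *\<^sub>v z) = 0\<^sub>v (dB (cd f))" by auto
  have kd: "dm k = G" "cd k = Y" using IH(1) by (auto simp: hom_iff)
  have fd: "dm f = Y" using Cons.prems by simp
  define h where "h = cmp f k"
  have hd: "dm h = G" "cd h = cd f" unfolding h_def using kd fd by auto
  obtain k' where k': "is_kernel C k' h" using ex_kernel by blast
  note k'D = kernelD[OF k']
  have hz0: "HB h *\<^sub>v z0 = 0\<^sub>v (dB (cd h))"
    unfolding h_def using B.H_mult_vec_comp[of k f z0] kd fd IH Fvec_carrier[OF IH(2)] Cons.prems by simp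
  obtain z1 where z1: "z1 \<in> Fvec \<rat> (dB (dm k'))" "HB k' *\<^sub>v z1 = z0"
    using B.left_exact[OF k', of z0] hz0 IH(2) hd by auto
  have k'd: "cd k' = G" using k'D hd by simp
  define k2 where "k2 = cmp k k'"
  have k2: "k2 \<in> hom C (dm k') Y" unfolding k2_def using k'd kd by (simp add: hom_iff)
  have k2v: "HB k2 *\<^sub>v z = HB k *\<^sub>v (HB k' *\<^sub>v z)" if "z \<in> Fvec \<rat> (dB (dm k'))" for z
    unfolding k2_def using B.H_mult_vec_comp[of k' k z] k'd kd Fvec_carrier[OF that] by simp
  have zk': "HB k' *\<^sub>v z \<in> Fvec \<rat> (dB G)" if "z \<in> Fvec \<rat> (dB (dm k'))" for z
    using B.H_vec[OF that] k'd by simp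
  have A: "\<forall>g\<in>set (f # fs). \<forall>z\<in>Fvec \<rat> (dB (dm k')). HB g *\<^sub>v (HB k2 *\<^sub>v z) = 0\<^sub>v (dB (cd g))"
  proof (intro ballI)
    fix g z assume g: "g \<in> set (f # fs)" and z: "z \<in> Fvec \<rat> (dB (dm k'))"
    show "HB g *\<^sub>v (HB k2 *\<^sub>v z) = 0\<^sub>v (dB (cd g))"
    proof (cases "g = f")
      case True
      have "HB f *\<^sub>v (HB k *\<^sub>v (HB k' *\<^sub>v z)) = HB h *\<^sub>v (HB k' *\<^sub>v z)"
        unfolding h_def using B.H_mult_vec_comp[of k f "HB k' *\<^sub>v z"] kd fd Fvec_carrier[OF zk'[OF z]] by simp
      also have "\<dots> = HB (cmp h k') *\<^sub>v z"
        using B.H_mult_vec_comp[of k' h z] k'D Fvec_carrier[OF z] by simp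
      also have "\<dots> = 0\<^sub>v (dB (cd f))" using k'D hd Fvec_carrier[OF z] by simp
      finally show ?thesis using True k2v[OF z] by simp
    next
      case False
      hence "g \<in> set fs" using g by simp
      thus ?thesis using IH(4) k2v[OF z] zk'[OF z] by simp
    qed
  qed
  show ?case
    apply (rule exI[of _ "dm k'"], rule exI[of _ k2], rule exI[of _ z1])
    using k2 z1 A k2v[OF z1(1)] IH(3) by simp
qed

lemma beta_lemma:
  assumes Yb: "\<forall>i<n. \<iota> i \<in> hom C X Y \<and> \<pi> i \<in> hom C Y X"
    "\<forall>i<n. \<forall>j<n. cmp (\<pi> j) (\<iota> i) = (if i = j then cid C X else zr X X)" and n: "n = dB X"
  shows "\<exists>\<beta>\<in>Fvec \<rat> (dB Y). \<forall>j<n. HB (\<pi> j) *\<^sub>v \<beta> = unit_vec n j"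
proof -
  define \<beta> where "\<beta> = vec (dB Y) (\<lambda>k. \<Sum>i<n. HB (\<iota> i) $$ (k,i))"
  have \<iota>c: "HB (\<iota> i) \<in> Fmat \<rat> (dB Y) n" if "i < n" for i
    using B.H_Fmat[of "\<iota> i"] Yb that n by (auto simp: hom_iff)
  have \<pi>c: "HB (\<pi> i) \<in> carrier_mat n (dB Y)" if "i < n" for i
    using B.H_carrier[of "\<pi> i"] Yb that n by (auto simp: hom_iff)
  have \<beta>: "\<beta> \<in> Fvec \<rat> (dB Y)"
    unfolding \<beta>_def Fvec_def using \<iota>c unfolding Fmat_def
    by (auto intro!: subfield_sum[OF subfield_Rats])
  have "HB (\<pi> j) *\<^sub>v \<beta> = unit_vec n j" if j: "j < n" for j
  proof (rule eq_vecI)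
    fix m assume "m < dim_vec (unit_vec n j :: complex vec)"
    hence m: "m < n" by simp
    have "(HB (\<pi> j) *\<^sub>v \<beta>) $ m = (\<Sum>k<dB Y. HB (\<pi> j) $$ (m,k) * (\<Sum>i<n. HB (\<iota> i) $$ (k,i)))"
      using mv_entry[OF \<pi>c[OF j] _ m, of \<beta>] unfolding \<beta>_def by simp
    also have "\<dots> = (\<Sum>i<n. \<Sum>k<dB Y. HB (\<pi> j) $$ (m,k) * HB (\<iota> i) $$ (k,i))"
      by (simp add: sum_distrib_left sum.swap[of _ "{..<dB Y}"])
    also have "\<dots> = (\<Sum>i<n. (HB (\<pi> j) * HB (\<iota> i)) $$ (m,i))"
    proof (rule sum.cong)
      fix i assume "i \<in> {..<n}" hence i: "i < n" by simp
      have ic: "HB (\<iota> i) \<in> carrier_mat (dB Y) n" using Fmat_carrier[OF \<iota>c[OF i]] .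
      have d: "dim_row (HB (\<pi> j)) = n" "dim_col (HB (\<iota> i)) = n" "dim_row (HB (\<iota> i)) = dB Y" "dim_col (HB (\<pi> j)) = dB Y"
        using \<pi>c[OF j] ic by auto
      have "(HB (\<pi> j) * HB (\<iota> i)) $$ (m,i) = row (HB (\<pi> j)) m \<bullet> col (HB (\<iota> i)) i"
        using d m i by (simp only: index_mult_mat)
      also have "\<dots> = (\<Sum>k<dB Y. HB (\<pi> j) $$ (m,k) * HB (\<iota> i) $$ (k,i))"
        unfolding scalar_prod_def using d m i by (simp add: atLeast0LessThan)
      finally show "(\<Sum>k<dB Y. HB (\<pi> j) $$ (m,k) * HB (\<iota> i) $$ (k,i)) = (HB (\<pi> j) * HB (\<iota> i)) $$ (m,i)" by simp
    qed simp
    also have "\<dots> = (\<Sum>i<n. (if i = j then 1\<^sub>m n else 0\<^sub>m n n) $$ (m,i))"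
    proof (rule sum.cong)
      fix i assume "i \<in> {..<n}" hence i: "i < n" by simp
      have "HB (\<pi> j) * HB (\<iota> i) = HB (cmp (\<pi> j) (\<iota> i))"
        using B.H_comp[of "\<iota> i" "\<pi> j"] Yb i j by (simp add: hom_iff)
      also have "\<dots> = (if i = j then 1\<^sub>m n else 0\<^sub>m n n)" using Yb(2) i j n by simp
      finally show "(HB (\<pi> j) * HB (\<iota> i)) $$ (m,i) = (if i = j then 1\<^sub>m n else 0\<^sub>m n n) $$ (m,i)" by simp
    qed simp
    also have "\<dots> = (\<Sum>i<n. if i = j then (if m = j then 1 else 0) else 0)"
      by (rule sum.cong) (use m in auto)
    also have "\<dots> = unit_vec n j $ m" using j m by (simp add: unit_vec_def)
    finally show "(HB (\<pi> j) *\<^sub>v \<beta>) $ m = unit_vec n j $ m" .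
  qed (use Yb j n in \<open>simp add: hom_iff\<close>)
  thus ?thesis using \<beta> by blast
qed


definition psi :: "'o \<Rightarrow> 'o \<Rightarrow> nat \<Rightarrow> (nat \<Rightarrow> 'm) \<Rightarrow> (nat \<Rightarrow> rat) \<Rightarrow> 'm" where
  "psi Y X n \<pi> q = msum Y X (map (\<lambda>i. csmul C (q i) (\<pi> i)) [0..<n])"

definition phi :: "'o \<Rightarrow> 'o \<Rightarrow> nat \<Rightarrow> (nat \<Rightarrow> 'm) \<Rightarrow> 'm \<Rightarrow> nat \<Rightarrow> 'm" where
  "phi Y X n \<pi> e j = ad (cmp e (\<pi> j)) (ng (psi Y X n \<pi> (\<lambda>i. rat_of (HB e $$ (i,j)))))"

definition Lm :: "nat \<Rightarrow> (nat \<Rightarrow> 'm) \<Rightarrow> complex vec \<Rightarrow> complex mat" where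
  "Lm n \<pi> g = mat n n (\<lambda>(m,i). (HB (\<pi> i) *\<^sub>v g) $ m)"

context
  fixes Y X n \<pi>
  assumes \<pi>: "\<forall>i<n. \<pi> i \<in> hom C Y X" and n: "n = dB X"
begin

lemma nX: "dB X = n" using n by simp

lemma psi_hom: "psi Y X n \<pi> q \<in> hom C Y X"
  unfolding psi_def using \<pi> by (intro msum_hom) (auto intro: smul_hom)

lemma psi_vec: assumes g: "g \<in> carrier_vec (dB Y)" and m: "m < n"
  shows "(HB (psi Y X n \<pi> q) *\<^sub>v g) $ m = (\<Sum>i<n. of_rat (q i) * (HB (\<pi> i) *\<^sub>v g) $ m)"
proof -
  have "(HB (psi Y X n \<pi> q) *\<^sub>v g) $ m = (\<Sum>i\<leftarrow>[0..<n]. (HB (csmul C (q i) (\<pi> i)) *\<^sub>v g) $ m)"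
    unfolding psi_def by (rule B.H_msum_vec) (use \<pi> g m n smul_hom in auto)
  also have "\<dots> = (\<Sum>i<n. (HB (csmul C (q i) (\<pi> i)) *\<^sub>v g) $ m)" by (rule sum_list_upt_sum)
  also have "\<dots> = (\<Sum>i<n. of_rat (q i) * (HB (\<pi> i) *\<^sub>v g) $ m)"
  proof (rule sum.cong)
    fix i assume "i \<in> {..<n}" hence i: "i < n" by simp
    have d: "dm (\<pi> i) = Y" "cd (\<pi> i) = X" using \<pi> i by (auto simp: hom_iff)
    show "(HB (csmul C (q i) (\<pi> i)) *\<^sub>v g) $ m = of_rat (q i) * (HB (\<pi> i) *\<^sub>v g) $ m"
      by (rule B.H_smul_vec) (use d g m n in auto)
  qed simp
  finally show ?thesis .
qed

lemma psi_vec': assumes g: "g \<in> carrier_vec (dB Y)" and m: "m < n" and v: "v \<in> Fvec \<rat> n"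
  shows "(HB (psi Y X n \<pi> (\<lambda>i. rat_of (v $ i))) *\<^sub>v g) $ m = (\<Sum>i<n. v $ i * (HB (\<pi> i) *\<^sub>v g) $ m)"
  unfolding psi_vec[OF g m] by (rule sum.cong) (use v rat_of in \<open>auto simp: Fvec_def\<close>)

lemma phi_hom: "e \<in> hom C X X \<Longrightarrow> j < n \<Longrightarrow> phi Y X n \<pi> e j \<in> hom C Y X"
  unfolding phi_def using \<pi> psi_hom by (intro add_hom comp_hom smul_hom) auto

lemma phi_vec: assumes e: "e \<in> hom C X X" and j: "j < n" and g: "g \<in> carrier_vec (dB Y)" and m: "m < n"
  shows "(HB (phi Y X n \<pi> e j) *\<^sub>v g) $ m =
     (HB e *\<^sub>v (HB (\<pi> j) *\<^sub>v g)) $ m - (\<Sum>i<n. HB e $$ (i,j) * (HB (\<pi> i) *\<^sub>v g) $ m)"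
proof -
  let ?q = "\<lambda>i. rat_of (HB e $$ (i,j))"
  have ed: "dm e = X" "cd e = X" using e by (auto simp: hom_iff)
  have pj: "dm (\<pi> j) = Y" "cd (\<pi> j) = X" using \<pi> j by (auto simp: hom_iff)
  have h1: "cmp e (\<pi> j) \<in> hom C Y X" using comp_hom \<pi> j e by blast
  have h2: "ng (psi Y X n \<pi> ?q) \<in> hom C Y X" using smul_hom psi_hom by blast
  have c1: "HB (cmp e (\<pi> j)) \<in> carrier_mat (dB X) (dB Y)" using B.H_carrier[of "cmp e (\<pi> j)"] h1 by (simp add: hom_iff)
  have c2: "HB (ng (psi Y X n \<pi> ?q)) \<in> carrier_mat (dB X) (dB Y)" using B.H_carrier[of "ng (psi Y X n \<pi> ?q)"] h2 by (simp add: hom_iff)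
  have "HB (phi Y X n \<pi> e j) = HB (cmp e (\<pi> j)) + HB (ng (psi Y X n \<pi> ?q))"
    unfolding phi_def by (rule B.H_add[OF h1 h2])
  hence "HB (phi Y X n \<pi> e j) *\<^sub>v g = HB (cmp e (\<pi> j)) *\<^sub>v g + HB (ng (psi Y X n \<pi> ?q)) *\<^sub>v g"
    using add_mult_distrib_mat_vec[OF c1 c2 g] by simp
  hence "(HB (phi Y X n \<pi> e j) *\<^sub>v g) $ m = (HB (cmp e (\<pi> j)) *\<^sub>v g) $ m + (HB (ng (psi Y X n \<pi> ?q)) *\<^sub>v g) $ m"
    using carrier_matD[OF c1] carrier_matD[OF c2] m nX by simp
  also have "(HB (cmp e (\<pi> j)) *\<^sub>v g) = HB e *\<^sub>v (HB (\<pi> j) *\<^sub>v g)"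
    using B.H_mult_vec_comp[of "\<pi> j" e g] pj ed g by simp
  also have "(HB (ng (psi Y X n \<pi> ?q)) *\<^sub>v g) $ m = of_rat (-1) * (HB (psi Y X n \<pi> ?q) *\<^sub>v g) $ m"
    by (rule B.H_smul_vec) (use psi_hom g m n in \<open>auto simp: hom_iff\<close>)
  also have "(HB (psi Y X n \<pi> ?q) *\<^sub>v g) $ m = (\<Sum>i<n. HB e $$ (i,j) * (HB (\<pi> i) *\<^sub>v g) $ m)"
  proof -
    have "(HB (psi Y X n \<pi> ?q) *\<^sub>v g) $ m = (\<Sum>i<n. of_rat (?q i) * (HB (\<pi> i) *\<^sub>v g) $ m)"
      by (rule psi_vec[OF g m])
    also have "\<dots> = (\<Sum>i<n. HB e $$ (i,j) * (HB (\<pi> i) *\<^sub>v g) $ m)"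
    proof (rule sum.cong)
      fix i assume "i \<in> {..<n}" hence i: "i < n" by simp
      have "HB e $$ (i,j) \<in> \<rat>" using B.H_Fmat[of e] ed i j n unfolding Fmat_def by auto
      thus "of_rat (?q i) * (HB (\<pi> i) *\<^sub>v g) $ m = HB e $$ (i,j) * (HB (\<pi> i) *\<^sub>v g) $ m"
        using rat_of by simp
    qed simp
    finally show ?thesis .
  qed
  finally show ?thesis by simp
qed

lemma Lm_carrier: "Lm n \<pi> g \<in> carrier_mat n n" unfolding Lm_def by simp
lemma Lm_dims[simp]: "dim_row (Lm n \<pi> g) = n" "dim_col (Lm n \<pi> g) = n" unfolding Lm_def by simp_all

lemma Lm_comm:
  assumes e: "e \<in> hom C X X" and g: "g \<in> carrier_vec (dB Y)"
    and z: "\<forall>j<n. HB (phi Y X n \<pi> e j) *\<^sub>v g = 0\<^sub>v n"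
  shows "Lm n \<pi> g * HB e = HB e * Lm n \<pi> g"
proof -
  have ed: "dm e = X" "cd e = X" using e by (auto simp: hom_iff)
  have Ec: "HB e \<in> carrier_mat n n" using B.H_carrier[of e] ed n by simp
  have pg: "HB (\<pi> i) *\<^sub>v g \<in> carrier_vec n" if "i < n" for i
    using B.H_carrier[of "\<pi> i"] \<pi> that g n by (auto simp: hom_iff)
  show ?thesis
  proof (rule eq_matI)
    fix m j assume mj: "m < dim_row (HB e * Lm n \<pi> g)" "j < dim_col (HB e * Lm n \<pi> g)"
    hence m: "m < n" and j: "j < n" using Ec by (auto simp: carrier_matD)
    have "(Lm n \<pi> g * HB e) $$ (m,j) = (\<Sum>i<n. (HB (\<pi> i) *\<^sub>v g) $ m * HB e $$ (i,j))"
      using carrier_matD[OF Ec] m j unfolding Lm_def by (simp add: scalar_prod_def atLeast0LessThan)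
    also have "\<dots> = (HB e *\<^sub>v (HB (\<pi> j) *\<^sub>v g)) $ m"
    proof -
      have "(HB (phi Y X n \<pi> e j) *\<^sub>v g) $ m = 0" using z j m by simp
      thus ?thesis using phi_vec[OF e j g m] by (simp add: ac_simps)
    qed
    also have "\<dots> = (\<Sum>l<n. HB e $$ (m,l) * (HB (\<pi> j) *\<^sub>v g) $ l)"
      by (rule mv_entry[OF Ec pg[OF j] m])
    also have "\<dots> = (HB e * Lm n \<pi> g) $$ (m,j)"
      using carrier_matD[OF Ec] m j pg[OF j] unfolding Lm_def by (simp add: scalar_prod_def atLeast0LessThan)
    finally show "(Lm n \<pi> g * HB e) $$ (m,j) = (HB e * Lm n \<pi> g) $$ (m,j)" .
  qed (use Ec Lm_carrier in auto)
qed

lemma Lm_vec: assumes g: "g \<in> carrier_vec (dB Y)" and v: "v \<in> Fvec \<rat> n"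
  shows "Lm n \<pi> g *\<^sub>v v = HB (psi Y X n \<pi> (\<lambda>i. rat_of (v $ i))) *\<^sub>v g"
proof (rule eq_vecI)
  have vc: "v \<in> carrier_vec n" using Fvec_carrier[OF v] .
  fix m assume "m < dim_vec (HB (psi Y X n \<pi> (\<lambda>i. rat_of (v $ i))) *\<^sub>v g)"
  hence m: "m < n" using psi_hom n by (simp add: hom_iff)
  have "(Lm n \<pi> g *\<^sub>v v) $ m = (\<Sum>i<n. (HB (\<pi> i) *\<^sub>v g) $ m * v $ i)"
    using mv_entry[OF Lm_carrier vc m] m unfolding Lm_def by simp
  also have "\<dots> = (HB (psi Y X n \<pi> (\<lambda>i. rat_of (v $ i))) *\<^sub>v g) $ m"
    unfolding psi_vec'[OF g m v] by (simp add: ac_simps)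
  finally show "(Lm n \<pi> g *\<^sub>v v) $ m = (HB (psi Y X n \<pi> (\<lambda>i. rat_of (v $ i))) *\<^sub>v g) $ m" .
qed (use psi_hom nX in \<open>simp add: hom_iff\<close>)

end


lemma inv_nat: assumes \<alpha>: "\<alpha> \<in> hom C M N" and w: "w \<in> carrier_vec (dB M)"
  shows "I N *\<^sub>v (HB \<alpha> *\<^sub>v w) = HdR \<alpha> *\<^sub>v (I M *\<^sub>v w)"
proof -
  have d: "dm \<alpha> = M" "cd \<alpha> = N" using \<alpha> by (auto simp: hom_iff)
  have Ba: "HB \<alpha> \<in> carrier_mat (dB N) (dB M)" using B.H_carrier[of \<alpha>] d by simp
  have Ra: "HdR \<alpha> \<in> carrier_mat (dR N) (dR M)" using R.H_carrier[of \<alpha>] d by simp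
  have "I N *\<^sub>v (HB \<alpha> *\<^sub>v w) = (I N * HB \<alpha>) *\<^sub>v w"
    using assoc_mult_mat_vec[OF I_carrier[of N] Ba w] by simp
  also have "I N * HB \<alpha> = HdR \<alpha> * I M" using I_nat[of \<alpha>] d by simp
  also have "(HdR \<alpha> * I M) *\<^sub>v w = HdR \<alpha> *\<^sub>v (I M *\<^sub>v w)"
    using assoc_mult_mat_vec[OF Ra I_carrier[of M] w] by simp
  finally show ?thesis .
qed

lemma Bcomp: "f \<in> hom C A B' \<Longrightarrow> g \<in> hom C B' D \<Longrightarrow> v \<in> carrier_vec (dB A) \<Longrightarrow>
   HB g *\<^sub>v (HB f *\<^sub>v v) = HB (cmp g f) *\<^sub>v v"
  using B.H_mult_vec_comp[of f g v] by (simp add: hom_iff)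

lemma Bid: "v \<in> carrier_vec (dB A) \<Longrightarrow> HB (cid C A) *\<^sub>v v = v" by simp

lemma Bcarr: "f \<in> hom C A B' \<Longrightarrow> v \<in> carrier_vec (dB A) \<Longrightarrow> HB f *\<^sub>v v \<in> carrier_vec (dB B')"
  using B.H_carrier[of f] by (auto simp: hom_iff)

lemma A_imp_B_single:
  assumes A: "period_conjecture C K dB HB dR HdR I"
    and \<sigma>: "\<sigma> \<in> Fvec \<rat> (dB M)" and \<omega>: "\<omega> \<in> Fvec K (dR M)" and z: "period I M \<sigma> \<omega> = 0"
  shows "\<exists>N' N s p. s \<in> hom C N' M \<and> p \<in> hom C M N \<and> short_exact C s p \<and>
          (\<exists>\<tau>\<in>Fvec \<rat> (dB N'). \<sigma> = HB s *\<^sub>v \<tau>) \<and>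
          (\<exists>\<eta>\<in>Fvec K (dR N). \<omega> = dual_map (HdR p) \<eta>)"
proof -
  have \<sigma>c: "\<sigma> \<in> carrier_vec (dB M)" and \<omega>c: "\<omega> \<in> carrier_vec (dR M)"
    using Fvec_carrier[OF \<sigma>] Fvec_carrier[OF \<omega>] .
  have "sum_list (map (\<lambda>(M,\<sigma>,\<omega>). pt M \<sigma> \<omega>) [(M,\<sigma>,\<omega>)]) \<in> KS"
    using A[unfolded period_conjecture_def, rule_format, of "[(M,\<sigma>,\<omega>)]"] \<sigma> \<omega> z by simp
  hence "pt M \<sigma> \<omega> \<in> KS" by simp
  then obtain R where R: "good R" "pt M \<sigma> \<omega> = rsum R" using Kspan_list by blast
  define zs where "zs = M # concat (map (\<lambda>(c,M',N',\<alpha>,\<tau>,\<eta>). [M',N']) R)"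
  obtain X \<iota> \<pi> where Xb: "\<forall>i<length zs. \<iota> i \<in> hom C (zs!i) X \<and> \<pi> i \<in> hom C X (zs!i)"
   "\<forall>i<length zs. \<forall>j<length zs. cmp (\<pi> j) (\<iota> i) = (if i = j then cid C (zs!i) else zr (zs!i) (zs!j))"
    using biprod_list[of zs] by blast
  define idx where "idx Z = (SOME i. i < length zs \<and> zs ! i = Z)" for Z
  have idx: "idx Z < length zs \<and> zs ! idx Z = Z" if "Z \<in> set zs" for Z
    unfolding idx_def by (rule someI_ex) (use that in \<open>auto simp: in_set_conv_nth\<close>)
  define iZ where "iZ Z = \<iota> (idx Z)" for Z
  define pZ where "pZ Z = \<pi> (idx Z)" for Z
  have iZ: "iZ Z \<in> hom C Z X" "pZ Z \<in> hom C X Z" "cmp (pZ Z) (iZ Z) = cid C Z" if "Z \<in> set zs" for Z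
    using Xb idx[OF that] unfolding iZ_def pZ_def by metis+
  have Mz: "M \<in> set zs" unfolding zs_def by simp
  have inzs: "M' \<in> set zs" "N' \<in> set zs" if "(c,M',N',\<alpha>,\<tau>,\<eta>) \<in> set R" for c M' N' \<alpha> \<tau> \<eta>
    using that unfolding zs_def by force+
  have Rg: "c \<in> K \<and> \<alpha> \<in> hom C M' N' \<and> \<tau> \<in> Fvec \<rat> (dB M') \<and> \<eta> \<in> Fvec K (dR N')"
    if "(c,M',N',\<alpha>,\<tau>,\<eta>) \<in> set R" for c M' N' \<alpha> \<tau> \<eta>
    using R(1) that unfolding good_def by fastforce
  define es where "es = map (\<lambda>(c,M',N',\<alpha>,\<tau>,\<eta>). cmp (iZ N') (cmp \<alpha> (pZ M'))) R"
  have es: "e \<in> hom C X X" if e_in: "e \<in> set es" for e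
  proof -
    obtain x where xr: "x \<in> set R" "e = (case x of (c,M',N',\<alpha>,\<tau>,\<eta>) \<Rightarrow> cmp (iZ N') (cmp \<alpha> (pZ M')))"
      using e_in unfolding es_def set_map by blast
    obtain c M' N' \<alpha> \<tau> \<eta> where xx: "x = (c,M',N',\<alpha>,\<tau>,\<eta>)" by (cases x) auto
    have r: "(c,M',N',\<alpha>,\<tau>,\<eta>) \<in> set R" "e = cmp (iZ N') (cmp \<alpha> (pZ M'))"
      using xr xx by auto
    show ?thesis unfolding r(2)
      by (intro comp_hom[OF comp_hom[OF iZ(2)[OF inzs(1)[OF r(1)]] conjunct1[OF conjunct2[OF Rg[OF r(1)]]]] iZ(1)[OF inzs(2)[OF r(1)]]])
  qed
  define n where "n = dB X"
  obtain Y \<iota>2 \<pi>2 where Yb0: "\<forall>i<length (replicate n X). \<iota>2 i \<in> hom C (replicate n X ! i) Y \<and> \<pi>2 i \<in> hom C Y (replicate n X ! i)"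
   "\<forall>i<length (replicate n X). \<forall>j<length (replicate n X). cmp (\<pi>2 j) (\<iota>2 i) =
      (if i = j then cid C (replicate n X ! i) else zr (replicate n X ! i) (replicate n X ! j))"
    using biprod_list[of "replicate n X"] by blast
  have Yb: "\<forall>i<n. \<iota>2 i \<in> hom C X Y \<and> \<pi>2 i \<in> hom C Y X"
    "\<forall>i<n. \<forall>j<n. cmp (\<pi>2 j) (\<iota>2 i) = (if i = j then cid C X else zr X X)"
    using Yb0 by auto
  have \<pi>2: "\<forall>i<n. \<pi>2 i \<in> hom C Y X" using Yb(1) by blast
  obtain \<beta> where \<beta>: "\<beta> \<in> Fvec \<rat> (dB Y)" "\<forall>j<n. HB (\<pi>2 j) *\<^sub>v \<beta> = unit_vec n j"
    using beta_lemma[OF Yb n_def] by blast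
  have \<beta>c: "\<beta> \<in> carrier_vec (dB Y)" using Fvec_carrier[OF \<beta>(1)] .
  define fs where "fs = concat (map (\<lambda>e. map (\<lambda>j. phi Y X n \<pi>2 e j) [0..<n]) es)"
  have fs_mem: "\<exists>e j. e \<in> set es \<and> j < n \<and> f = phi Y X n \<pi>2 e j" if "f \<in> set fs" for f
    using that unfolding fs_def by fastforce
  have fs1: "\<forall>f\<in>set fs. dm f = Y"
    using fs_mem phi_hom[OF \<pi>2 n_def] es by (fastforce simp: hom_iff)
  have fs2: "\<forall>f\<in>set fs. HB f *\<^sub>v \<beta> = 0\<^sub>v (dB (cd f))"
  proof
    fix f assume "f \<in> set fs"
    then obtain e j where ej: "e \<in> set es" "j < n" "f = phi Y X n \<pi>2 e j" using fs_mem by blast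
    have eX: "e \<in> hom C X X" using es[OF ej(1)] .
    have fh: "f \<in> hom C Y X" using phi_hom[OF \<pi>2 n_def eX ej(2)] ej(3) by simp
    have Ec: "HB e \<in> carrier_mat n n" using B.H_carrier[of e] eX n_def by (simp add: hom_iff)
    show "HB f *\<^sub>v \<beta> = 0\<^sub>v (dB (cd f))"
    proof (rule eq_vecI)
      fix m assume "m < dim_vec (0\<^sub>v (dB (cd f)) :: complex vec)"
      hence m: "m < n" using fh n_def by (simp add: hom_iff)
      have "(HB f *\<^sub>v \<beta>) $ m = (HB e *\<^sub>v (HB (\<pi>2 j) *\<^sub>v \<beta>)) $ m - (\<Sum>i<n. HB e $$ (i,j) * (HB (\<pi>2 i) *\<^sub>v \<beta>) $ m)"
        unfolding ej(3) by (rule phi_vec[OF \<pi>2 n_def eX ej(2) \<beta>c m])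
      also have "\<dots> = (HB e *\<^sub>v unit_vec n j) $ m - (\<Sum>i<n. HB e $$ (i,j) * unit_vec n i $ m)"
        using \<beta>(2) ej(2) by simp
      also have "(HB e *\<^sub>v unit_vec n j) $ m = HB e $$ (m,j)"
      proof -
        have "(HB e *\<^sub>v unit_vec n j) $ m = (\<Sum>k<n. HB e $$ (m,k) * unit_vec n j $ k)"
          by (rule mv_entry[OF Ec _ m]) simp
        also have "\<dots> = (\<Sum>k<n. if k = j then HB e $$ (m,j) else 0)"
          by (rule sum.cong) (auto simp: unit_vec_def)
        also have "\<dots> = HB e $$ (m,j)" using ej(2) by simp
        finally show ?thesis .
      qed
      also have "(\<Sum>i<n. HB e $$ (i,j) * unit_vec n i $ m) = (\<Sum>i<n. if i = m then HB e $$ (m,j) else 0)"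
        by (rule sum.cong) (use m in \<open>auto simp: unit_vec_def\<close>)
      also have "\<dots> = HB e $$ (m,j)" using m by simp
      finally show "(HB f *\<^sub>v \<beta>) $ m = 0\<^sub>v (dB (cd f)) $ m" using fh n_def m by (simp add: hom_iff)
    qed (use fh n_def in \<open>simp add: hom_iff\<close>)
  qed
  obtain G k z0 where Gk: "k \<in> hom C G Y" "z0 \<in> Fvec \<rat> (dB G)" "HB k *\<^sub>v z0 = \<beta>"
     "\<forall>f\<in>set fs. \<forall>z\<in>Fvec \<rat> (dB G). HB f *\<^sub>v (HB k *\<^sub>v z) = 0\<^sub>v (dB (cd f))"
    using G_lemma[OF fs1 \<beta>(1) fs2] by blast
  have iM: "iZ M \<in> hom C M X" and pM: "pZ M \<in> hom C X M" and pi: "cmp (pZ M) (iZ M) = cid C M"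
    using iZ[OF Mz] by auto
  define \<sigma>' where "\<sigma>' = HB (iZ M) *\<^sub>v \<sigma>"
  have \<sigma>': "\<sigma>' \<in> Fvec \<rat> n" unfolding \<sigma>'_def n_def using B.H_vec[of \<sigma> "iZ M"] \<sigma> iM by (simp add: hom_iff)
  have \<sigma>'c: "\<sigma>' \<in> carrier_vec (dB X)" using Fvec_carrier[OF \<sigma>'] n_def by simp
  define \<psi> where "\<psi> = psi Y X n \<pi>2 (\<lambda>i. rat_of (\<sigma>' $ i))"
  have \<psi>: "\<psi> \<in> hom C Y X" unfolding \<psi>_def by (rule psi_hom[OF \<pi>2 n_def])
  define h where "h = cmp (pZ M) (cmp \<psi> k)"
  have h: "h \<in> hom C G M" unfolding h_def by (intro comp_hom[OF comp_hom[OF Gk(1) \<psi>] pM])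
  have hv: "HB h *\<^sub>v z = HB (pZ M) *\<^sub>v (HB \<psi> *\<^sub>v (HB k *\<^sub>v z))" if "z \<in> carrier_vec (dB G)" for z
  proof -
    have "HB h *\<^sub>v z = HB (pZ M) *\<^sub>v (HB (cmp \<psi> k) *\<^sub>v z)"
      unfolding h_def using Bcomp[OF comp_hom[OF Gk(1) \<psi>] pM that] by simp
    also have "HB (cmp \<psi> k) *\<^sub>v z = HB \<psi> *\<^sub>v (HB k *\<^sub>v z)" using Bcomp[OF Gk(1) \<psi> that] by simp
    finally show ?thesis .
  qed
  obtain N' N s p where sp: "s \<in> hom C N' M" "p \<in> hom C M N" "short_exact C s p"
    "\<forall>v\<in>Fvec \<rat> (dB G). \<exists>u\<in>Fvec \<rat> (dB N'). HB s *\<^sub>v u = HB h *\<^sub>v v"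
    "\<forall>u\<in>Fvec \<rat> (dB N'). \<exists>v\<in>Fvec \<rat> (dB G). HB s *\<^sub>v u = HB h *\<^sub>v v"
    using B.image_ses[of h] h by (auto simp: hom_iff)
  have "HB \<psi> *\<^sub>v \<beta> = \<sigma>'"
  proof (rule eq_vecI)
    fix m assume "m < dim_vec \<sigma>'" hence m: "m < n" using \<sigma>'c n_def by simp
    have "(HB \<psi> *\<^sub>v \<beta>) $ m = (\<Sum>i<n. \<sigma>' $ i * (HB (\<pi>2 i) *\<^sub>v \<beta>) $ m)"
      unfolding \<psi>_def by (rule psi_vec'[OF \<pi>2 n_def \<beta>c m \<sigma>'])
    also have "\<dots> = (\<Sum>i<n. if i = m then \<sigma>' $ m else 0)"
      by (rule sum.cong) (use \<beta>(2) m in \<open>auto simp: unit_vec_def\<close>)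
    finally show "(HB \<psi> *\<^sub>v \<beta>) $ m = \<sigma>' $ m" using m by simp
  qed (use \<psi> \<sigma>'c in \<open>simp add: hom_iff\<close>)
  hence "HB h *\<^sub>v z0 = \<sigma>"
    using hv[OF Fvec_carrier[OF Gk(2)]] Gk(3) Bcomp[OF iM pM \<sigma>c] pi \<sigma>c unfolding \<sigma>'_def by simp
  then obtain \<tau> where \<tau>: "\<tau> \<in> Fvec \<rat> (dB N')" "\<sigma> = HB s *\<^sub>v \<tau>" using sp(4) Gk(2) by metis
  have orth_h: "\<omega> \<bullet> (I M *\<^sub>v (HB h *\<^sub>v z)) = 0" if zF: "z \<in> Fvec \<rat> (dB G)" for z
  proof -
    have zc: "z \<in> carrier_vec (dB G)" using Fvec_carrier[OF zF] .
    define g where "g = HB k *\<^sub>v z"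
    have gF: "g \<in> Fvec \<rat> (dB Y)" unfolding g_def using B.H_vec[of z k] zF Gk(1) by (simp add: hom_iff)
    have gc: "g \<in> carrier_vec (dB Y)" using Fvec_carrier[OF gF] .
    define L where "L = Lm n \<pi>2 g"
    have Lc: "L \<in> carrier_mat n n" unfolding L_def by (rule Lm_carrier[OF \<pi>2 n_def])
    have fsin: "phi Y X n \<pi>2 e j \<in> set fs" if "e \<in> set es" "j < n" for e j
      using that unfolding fs_def by force
    have comm: "L * HB e = HB e * L" if eS: "e \<in> set es" for e
    proof -
      have "\<forall>j<n. HB (phi Y X n \<pi>2 e j) *\<^sub>v g = 0\<^sub>v n"
      proof (intro allI impI)
        fix j assume j: "j < n"
        have "phi Y X n \<pi>2 e j \<in> hom C Y X" using phi_hom[OF \<pi>2 n_def es[OF eS] j] .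
        thus "HB (phi Y X n \<pi>2 e j) *\<^sub>v g = 0\<^sub>v n"
          using Gk(4) fsin[OF eS j] zF n_def unfolding g_def by (simp add: hom_iff)
      qed
      thus ?thesis unfolding L_def by (rule Lm_comm[OF \<pi>2 n_def es[OF eS] gc])
    qed
    define u where "u Z = I Z * (HB (pZ Z) * (L * HB (iZ Z)))" for Z
    have Hi: "HB (iZ Z) \<in> carrier_mat n (dB Z)" "HB (pZ Z) \<in> carrier_mat (dB Z) n" if "Z \<in> set zs" for Z
      using B.H_carrier[of "iZ Z"] B.H_carrier[of "pZ Z"] iZ[OF that] n_def by (auto simp: hom_iff)
    have uc: "u Z \<in> carrier_mat (dR Z) (dB Z)" if "Z \<in> set zs" for Z
      unfolding u_def using I_carrier[of Z] Hi[OF that] Lc by auto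
    have uv: "u Z *\<^sub>v \<tau> = I Z *\<^sub>v (HB (pZ Z) *\<^sub>v (L *\<^sub>v (HB (iZ Z) *\<^sub>v \<tau>)))"
      if Z: "Z \<in> set zs" and \<tau>: "\<tau> \<in> carrier_vec (dB Z)" for Z \<tau>
    proof -
      have c1: "L * HB (iZ Z) \<in> carrier_mat n (dB Z)" using Lc Hi[OF Z] by auto
      have c2: "HB (pZ Z) * (L * HB (iZ Z)) \<in> carrier_mat (dB Z) (dB Z)" using c1 Hi[OF Z] by auto
      have "u Z *\<^sub>v \<tau> = I Z *\<^sub>v ((HB (pZ Z) * (L * HB (iZ Z))) *\<^sub>v \<tau>)"
        unfolding u_def by (rule assoc_mult_mat_vec[OF I_carrier c2 \<tau>])
      also have "(HB (pZ Z) * (L * HB (iZ Z))) *\<^sub>v \<tau> = HB (pZ Z) *\<^sub>v ((L * HB (iZ Z)) *\<^sub>v \<tau>)"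
        by (rule assoc_mult_mat_vec[OF Hi(2)[OF Z] c1 \<tau>])
      also have "(L * HB (iZ Z)) *\<^sub>v \<tau> = L *\<^sub>v (HB (iZ Z) *\<^sub>v \<tau>)"
        by (rule assoc_mult_mat_vec[OF Lc Hi(1)[OF Z] \<tau>])
      finally show ?thesis .
    qed
    have nat: "HdR \<alpha> *\<^sub>v (u M' *\<^sub>v \<tau>) = u N' *\<^sub>v (HB \<alpha> *\<^sub>v \<tau>)"
      if r: "(c,M',N',\<alpha>,\<tau>0,\<eta>0) \<in> set R" and \<tau>: "\<tau> \<in> carrier_vec (dB M')" for c M' N' \<alpha> \<tau>0 \<eta>0 \<tau>
    proof -
      have \<alpha>: "\<alpha> \<in> hom C M' N'" using Rg[OF r] by blast
      have M'z: "M' \<in> set zs" and N'z: "N' \<in> set zs" using inzs[OF r] by auto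
      note iM' = iZ[OF M'z] and iN' = iZ[OF N'z]
      define e where "e = cmp (iZ N') (cmp \<alpha> (pZ M'))"
      have eS: "e \<in> set es" unfolding e_def es_def using r by force
      have eX: "e \<in> hom C X X" using es[OF eS] .
      have Ec: "HB e \<in> carrier_mat n n" using B.H_carrier[of e] eX n_def by (simp add: hom_iff)
      have ah: "cmp \<alpha> (pZ M') \<in> hom C X N'" using comp_hom[OF iM'(2) \<alpha>] .
      have e1: "HB e *\<^sub>v y = HB (iZ N') *\<^sub>v (HB \<alpha> *\<^sub>v (HB (pZ M') *\<^sub>v y))" if y: "y \<in> carrier_vec (dB X)" for y
      proof -
        have "HB e *\<^sub>v y = HB (iZ N') *\<^sub>v (HB (cmp \<alpha> (pZ M')) *\<^sub>v y)"
          unfolding e_def using Bcomp[OF ah iN'(1) y] by simp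
        also have "HB (cmp \<alpha> (pZ M')) *\<^sub>v y = HB \<alpha> *\<^sub>v (HB (pZ M') *\<^sub>v y)"
          using Bcomp[OF iM'(2) \<alpha> y] by simp
        finally show ?thesis .
      qed
      define x where "x = HB (iZ M') *\<^sub>v \<tau>"
      have xc: "x \<in> carrier_vec (dB X)" unfolding x_def using Bcarr[OF iM'(1) \<tau>] .
      have xn: "x \<in> carrier_vec n" using xc n_def by simp
      have px: "HB (pZ M') *\<^sub>v x = \<tau>" unfolding x_def using Bcomp[OF iM'(1) iM'(2) \<tau>] iM'(3) \<tau> by simp
      have a\<tau>: "HB \<alpha> *\<^sub>v \<tau> \<in> carrier_vec (dB N')" using Bcarr[OF \<alpha> \<tau>] .
      have Lx: "L *\<^sub>v x \<in> carrier_vec (dB X)" using Lc xn n_def by simp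
      have "u N' *\<^sub>v (HB \<alpha> *\<^sub>v \<tau>) = I N' *\<^sub>v (HB (pZ N') *\<^sub>v (L *\<^sub>v (HB (iZ N') *\<^sub>v (HB \<alpha> *\<^sub>v \<tau>))))"
        by (rule uv[OF N'z a\<tau>])
      also have "HB (iZ N') *\<^sub>v (HB \<alpha> *\<^sub>v \<tau>) = HB e *\<^sub>v x" using e1[OF xc] px by simp
      also have "L *\<^sub>v (HB e *\<^sub>v x) = (L * HB e) *\<^sub>v x" using assoc_mult_mat_vec[OF Lc Ec xn] by simp
      also have "\<dots> = (HB e * L) *\<^sub>v x" using comm[OF eS] by simp
      also have "\<dots> = HB e *\<^sub>v (L *\<^sub>v x)" using assoc_mult_mat_vec[OF Ec Lc xn] by simp
      also have "HB (pZ N') *\<^sub>v (HB e *\<^sub>v (L *\<^sub>v x)) = HB \<alpha> *\<^sub>v (HB (pZ M') *\<^sub>v (L *\<^sub>v x))"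
      proof -
        have w: "HB \<alpha> *\<^sub>v (HB (pZ M') *\<^sub>v (L *\<^sub>v x)) \<in> carrier_vec (dB N')"
          using Bcarr[OF \<alpha> Bcarr[OF iM'(2) Lx]] .
        show ?thesis unfolding e1[OF Lx] using Bcomp[OF iN'(1) iN'(2) w] iN'(3) w by simp
      qed
      also have "I N' *\<^sub>v (HB \<alpha> *\<^sub>v (HB (pZ M') *\<^sub>v (L *\<^sub>v x))) = HdR \<alpha> *\<^sub>v (I M' *\<^sub>v (HB (pZ M') *\<^sub>v (L *\<^sub>v x)))"
        by (rule inv_nat[OF \<alpha> Bcarr[OF iM'(2) Lx]])
      also have "I M' *\<^sub>v (HB (pZ M') *\<^sub>v (L *\<^sub>v x)) = u M' *\<^sub>v \<tau>" unfolding x_def by (rule uv[OF M'z \<tau>, symmetric])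
      finally show ?thesis by simp
    qed
    have Phi0: "Phi zs u (rsum R) = 0"
      unfolding Phi_rsum
    proof (rule sum_list_zeros)
      fix x assume x: "x \<in> set R"
      obtain c M' N' \<alpha> \<tau> \<eta> where xx: "x = (c,M',N',\<alpha>,\<tau>,\<eta>)" by (cases x) auto
      have r: "(c,M',N',\<alpha>,\<tau>,\<eta>) \<in> set R" using x xx by simp
      have g: "c \<in> K" "\<alpha> \<in> hom C M' N'" "\<tau> \<in> Fvec \<rat> (dB M')" "\<eta> \<in> Fvec K (dR N')" using Rg[OF r] by auto
      have "Phi zs u (relf M' N' \<alpha> \<tau> \<eta>) = 0"
        by (rule Phi_rel[OF inzs[OF r] g(2) Fvec_carrier[OF g(3)] Fvec_carrier[OF g(4)]
              uc[OF inzs(1)[OF r]] uc[OF inzs(2)[OF r]] nat[OF r Fvec_carrier[OF g(3)]]])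
      thus "(case x of (c,M,N,\<alpha>,\<tau>,\<eta>) \<Rightarrow> c * Phi zs u (relf M N \<alpha> \<tau> \<eta>)) = 0" using xx by simp
    qed
    have "\<omega> \<bullet> (u M *\<^sub>v \<sigma>) = 0"
      using Phi_pt[where u=u, OF Mz \<sigma>c \<omega>c uc[OF Mz]] R(2) Phi0 by simp
    moreover have "u M *\<^sub>v \<sigma> = I M *\<^sub>v (HB h *\<^sub>v z)"
    proof -
      have "u M *\<^sub>v \<sigma> = I M *\<^sub>v (HB (pZ M) *\<^sub>v (L *\<^sub>v \<sigma>'))" unfolding \<sigma>'_def by (rule uv[OF Mz \<sigma>c])
      also have "L *\<^sub>v \<sigma>' = HB \<psi> *\<^sub>v g" unfolding L_def \<psi>_def by (rule Lm_vec[OF \<pi>2 n_def gc \<sigma>'])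
      also have "HB (pZ M) *\<^sub>v (HB \<psi> *\<^sub>v g) = HB h *\<^sub>v z" unfolding g_def using hv[OF zc] by simp
      finally show ?thesis .
    qed
    ultimately show ?thesis by simp
  qed
  have orth: "\<forall>u\<in>Fvec \<rat> (dB N'). \<omega> \<bullet> (I M *\<^sub>v (HB s *\<^sub>v u)) = 0"
    using sp(5) orth_h by metis
  obtain \<eta> where "\<eta> \<in> Fvec K (dR N)" "\<omega> = dual_map (HdR p) \<eta>"
    using final_step[OF sp(1,2,3) \<omega> orth] by blast
  thus ?thesis using sp(1,2,3) \<tau> by blast
qed

end


theorem mainTheorem7:
  fixes C :: "('o, 'm) qcat"
    and K :: "complex set"
    and dB dR :: "'o \<Rightarrow> nat"
    and HB HdR :: "'m \<Rightarrow> complex mat"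
    and I :: "'o \<Rightarrow> complex mat"
  assumes "subfield_C K"
    and "Qlinear_abelian C"
    and "fiber_functor C \<rat> dB HB"
    and "fiber_functor C K dR HdR"
    and "comparison C dB HB dR HdR I"
  shows "period_conjecture C K dB HB dR HdR I \<longleftrightarrow>
    (\<forall>M \<sigma> \<omega>. \<sigma> \<in> Fvec \<rat> (dB M) \<longrightarrow> \<omega> \<in> Fvec K (dR M) \<longrightarrow> period I M \<sigma> \<omega> = 0 \<longrightarrow>
       (\<exists>N' N s p. s \<in> hom C N' M \<and> p \<in> hom C M N \<and> short_exact C s p \<and>
          (\<exists>\<tau>\<in>Fvec \<rat> (dB N'). \<sigma> = HB s *\<^sub>v \<tau>) \<and>
          (\<exists>\<eta>\<in>Fvec K (dR N). \<omega> = dual_map (HdR p) \<eta>)))"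
proof -
  interpret S: Setup C K dB dR HB HdR I
    by (intro Setup.intro QAB.intro Setup_axioms.intro) (use assms in auto)
  show ?thesis using S.B_imp_A S.A_imp_B_single by blast
qed

end
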